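(* Let $a,b\ge1$ be coprime with $\frac ab\le\frac35$, and let $A_{ij}$ denote the coefficient of $u^iv^jw^{a+b-1-i-j}$ in $P_{a/b}(u,v,w)$, with $A_{ij}=0$ for pairs not corresponding to a monomial of $P_{a/b}$. Then the coefficients on the line $i+j=a+b-3$ are log-concave: for every integer $i$, with $j=a+b-3-i$, $$A_{i,j}^2\ge A_{i-1,j+1}\,A_{i+1,j-1}.$$
   Context: Markov polynomials. Let $x,y,z$ be indeterminates. Consider the set consisting of all rationals $\rho\in[0,1]$, each written in lowest terms $\rho=a/b$ with integers $a\ge 0$, $b\ge 1$, together with the formal symbol $1/0$. Define Laurent polynomials $M_\rho(x,y,z)$ recursively by $M_{1/0}=y$, $M_{0/1}=x$, $M_{1/1}=\frac{x^2+y^2}{z}$, and: whenever $a/b$, $c/d$ are in this set with $|ad-bc|=1$ and $(a+2c)/(b+2d)\in[0,1]$, then $M_{\frac{a+2c}{b+2d}}=\big(M_{c/d}^2+M_{\frac{a+c}{b+d}}^2\big)/M_{a/b}$. This determines $M_\rho$ for every rational $\rho\in[0,1]$. Numerator. For coprime $1\le a\le b$, $P_{a/b}(u,v,w)$ denotes the homogeneous polynomial of degree $a+b-1$ such that $M_{a/b}(x,y,z)=P_{a/b}(x^2,y^2,z^2)/(x^{a-1}y^{b-1}z^{a+b-1})$; its existence is known. *)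

theory Defs
  imports Complex_Main
begin

text \<open>Index set: pairs (a,b) representing a/b in [0,1] in lowest terms, plus the symbol 1/0.\<close>
definition frac_dom :: "nat \<times> nat \<Rightarrow> bool" where
  "frac_dom p \<longleftrightarrow> p = (1,0) \<or> (snd p \<ge> 1 \<and> fst p \<le> snd p \<and> coprime (fst p) (snd p))"

text \<open>A family of functions M_rho(x,y,z) (Laurent polynomials viewed as real functions)
  satisfying the defining recursion; zero outside the index set.\<close>
definition markov_family :: "(nat \<times> nat \<Rightarrow> real \<Rightarrow> real \<Rightarrow> real \<Rightarrow> real) \<Rightarrow> bool" where
  "markov_family F \<longleftrightarrow>
     (\<forall>p. \<not> frac_dom p \<longrightarrow> F p = (\<lambda>x y z. 0)) \<and>
     F (1,0) = (\<lambda>x y z. y) \<and>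
     F (0,1) = (\<lambda>x y z. x) \<and>
     F (1,1) = (\<lambda>x y z. (x^2 + y^2) / z) \<and>
     (\<forall>a b c d. frac_dom (a,b) \<and> frac_dom (c,d) \<and>
        \<bar>int a * int d - int b * int c\<bar> = 1 \<and> a + 2*c \<le> b + 2*d \<longrightarrow>
        F (a + 2*c, b + 2*d) =
          (\<lambda>x y z. ((F (c,d) x y z)^2 + (F (a+c, b+d) x y z)^2) / F (a,b) x y z))"

definition markovM :: "nat \<times> nat \<Rightarrow> real \<Rightarrow> real \<Rightarrow> real \<Rightarrow> real" where
  "markovM = (THE F. markov_family F)"

text \<open>Coefficients of P_{a/b}: Pcoeff a b i j is the coefficient of u^i v^j w^(a+b-1-i-j).\<close>
definition Pcoeff :: "nat \<Rightarrow> nat \<Rightarrow> nat \<Rightarrow> nat \<Rightarrow> real" where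
  "Pcoeff a b = (THE A.
     (\<forall>i j. a + b - 1 < i + j \<longrightarrow> A i j = 0) \<and>
     (\<forall>x y z :: real. x > 0 \<longrightarrow> y > 0 \<longrightarrow> z > 0 \<longrightarrow>
        markovM (a,b) x y z =
          (\<Sum>i\<le>a+b-1. \<Sum>j\<le>a+b-1-i. A i j * (x^2)^i * (y^2)^j * (z^2)^(a+b-1-i-j))
          / (x^(a-1) * y^(b-1) * z^(a+b-1))))"

definition Acoef :: "nat \<Rightarrow> nat \<Rightarrow> int \<Rightarrow> int \<Rightarrow> real" where
  "Acoef a b i j = (if i \<ge> 0 \<and> j \<ge> 0 then Pcoeff a b (nat i) (nat j) else 0)"

end

theory Submission
  imports Defs "HOL-Computational_Algebra.Polynomial"
begin


definition sP :: "real poly" where "sP = [:1,1:]"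
definition TP :: "real poly poly" where "TP = pCons sP 1"
definition Mono :: "nat \<Rightarrow> nat \<Rightarrow> real poly poly" where "Mono i k = monom (monom 1 i) k"
definition eval2 :: "real poly poly \<Rightarrow> real \<Rightarrow> real \<Rightarrow> real" where
  "eval2 P u w = poly (poly P [:w:]) u"
definition Phom :: "nat \<Rightarrow> real poly poly \<Rightarrow> real \<Rightarrow> real \<Rightarrow> real \<Rightarrow> real" where
  "Phom n P u v w = v^n * eval2 P (u/v) (w/v)"
definition HD :: "nat \<Rightarrow> real poly poly \<Rightarrow> bool" where
  "HD n P \<longleftrightarrow> (\<forall>k i. coeff (coeff P k) i \<noteq> 0 \<longrightarrow> i + k \<le> n)"

lemma eval2_mult: "eval2 (P*Q) u w = eval2 P u w * eval2 Q u w"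
  by (simp add: eval2_def)
lemma eval2_diff: "eval2 (P-Q) u w = eval2 P u w - eval2 Q u w"
  by (simp add: eval2_def)
lemma eval2_T: "eval2 TP u w = 1 + u + w"
  by (simp add: eval2_def TP_def sP_def)
lemma eval2_Mono: "eval2 (Mono i k) u w = u^i * w^k"
  by (simp add: eval2_def Mono_def poly_monom)
lemma eval2_one: "eval2 1 u w = 1"
  by (simp add: eval2_def)

lemma Phom_mult: "Phom (n1+n2) (P*Q) u v w = Phom n1 P u v w * Phom n2 Q u v w"
  by (simp add: Phom_def eval2_mult power_add)
lemma Phom_diff: "Phom n (P-Q) u v w = Phom n P u v w - Phom n Q u v w"
  by (simp add: Phom_def eval2_diff algebra_simps)
lemma Phom_T: "v \<noteq> 0 \<Longrightarrow> Phom 1 TP u v w = u + v + w"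
  by (simp add: Phom_def eval2_T field_simps)
lemma Phom_one: "Phom 0 1 u v w = 1"
  by (simp add: Phom_def eval2_one)
lemma Phom_Mono_mult: 
  assumes "v \<noteq> 0" "n = 2*(i+j) + m"
  shows "Phom n (Mono i (i+j) * P) u v w = u^i * v^j * w^(i+j) * Phom m P u v w"
proof -
  have "Phom n (Mono i (i+j) * P) u v w = v^(2*(i+j)) * (u/v)^i * (w/v)^(i+j) * (v^m * eval2 P (u/v) (w/v))"
    by (simp add: Phom_def eval2_mult eval2_Mono assms power_add)
  also have "v^(2*(i+j)) * (u/v)^i * (w/v)^(i+j) = u^i * v^j * w^(i+j)"
  proof -
    have "v^(2*(i+j)) = v^i*v^i*v^j*v^j" by (simp add: power_add mult_2)
    then show ?thesis using assms(1) by (simp add: power_divide power_add field_simps)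
  qed
  finally show ?thesis by (simp add: Phom_def)
qed

lemma HD_mono: "HD n P \<Longrightarrow> n \<le> m \<Longrightarrow> HD m P"
  unfolding HD_def by fastforce
lemma HD_diff: "HD n P \<Longrightarrow> HD n Q \<Longrightarrow> HD n (P - Q)"
  unfolding HD_def by (metis coeff_diff diff_zero)
lemma HD_one: "HD 0 1"
  unfolding HD_def by (auto simp: coeff_1 split: if_splits)
lemma HD_T: "HD 1 TP"
  unfolding HD_def TP_def sP_def
  by (auto simp: coeff_pCons coeff_1 split: nat.splits if_splits)
lemma HD_Mono: "HD (i+k) (Mono i k)"
  unfolding HD_def Mono_def by (auto simp: coeff_monom split: if_splits)
lemma HD_mult:
  assumes "HD n1 P" "HD n2 Q" shows "HD (n1+n2) (P*Q)"
  unfolding HD_def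
proof (intro allI impI)
  fix k i assume ne: "coeff (coeff (P*Q) k) i \<noteq> 0"
  show "i + k \<le> n1 + n2"
  proof (rule ccontr)
    assume big: "\<not> i + k \<le> n1 + n2"
    have "coeff (coeff (P*Q) k) i = (\<Sum>k1\<le>k. \<Sum>j\<le>i. coeff (coeff P k1) j * coeff (coeff Q (k-k1)) (i-j))"
      by (simp add: coeff_mult coeff_sum)
    also have "\<dots> = 0"
    proof (intro sum.neutral ballI)
      fix k1 j assume "k1 \<in> {..k}" "j \<in> {..i}"
      then have "j + k1 > n1 \<or> (i-j) + (k-k1) > n2" using big by auto
      then show "coeff (coeff P k1) j * coeff (coeff Q (k-k1)) (i-j) = 0"
        using assms unfolding HD_def by (metis linorder_not_less mult_eq_0_iff)
    qed
    finally show False using ne by simp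
  qed
qed



definition Pnew :: "real poly poly \<Rightarrow> real poly poly \<Rightarrow> real poly poly \<Rightarrow> nat \<Rightarrow> nat \<Rightarrow> real poly poly" where
  "Pnew Pa Pc Pm c1 c2 = TP * Pc * Pm - Mono c1 (c1+c2) * Pa"

definition Lp :: "nat \<Rightarrow> nat \<Rightarrow> real poly" where
  "Lp p q = [: real p - 1, real q - 1 :]"
definition Qp :: "nat \<Rightarrow> nat \<Rightarrow> real poly" where
  "Qp p q = [: (real p - 1)*(real p - 2)/2, real p * real q - 4 * real p + 2, (real q - 1)*(real q - 2)/2 :]"

lemma coeff_TP_0: "coeff (TP * X) 0 = sP * coeff X 0"
  by (simp add: TP_def mult_pCons_left)
lemma coeff_TP_Suc: "coeff (TP * X) (Suc k) = sP * coeff X (Suc k) + coeff X k"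
  by (simp add: TP_def mult_pCons_left)
lemma coeff_mult_012:
  "coeff (P*Q) 0 = coeff P 0 * coeff Q 0"
  "coeff (P*Q) 1 = coeff P 0 * coeff Q 1 + coeff P 1 * coeff Q 0"
  "coeff (P*Q) 2 = coeff P 0 * coeff Q 2 + coeff P 1 * coeff Q 1 + coeff P 2 * coeff Q 0"
  by (simp_all add: coeff_mult numeral_2_eq_2 atMost_Suc algebra_simps)
lemma coeff_Mono_mult: "coeff (Mono i e * P) k = (if k < e then 0 else monom 1 i * coeff P (k - e))"
  by (simp add: Mono_def coeff_monom_mult)

lemma Pnew_coeffs:
  fixes Pa Pc Pm defines "C0 \<equiv> coeff Pc 0" and "C1 \<equiv> coeff Pc 1" and "C2 \<equiv> coeff Pc 2"
    and "D0 \<equiv> coeff Pm 0" and "D1 \<equiv> coeff Pm 1" and "D2 \<equiv> coeff Pm 2"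
  assumes "e = c1 + c2"
  shows "coeff (Pnew Pa Pc Pm c1 c2) 0 = sP * C0 * D0 - (if e = 0 then monom 1 c1 * coeff Pa 0 else 0)"
    "coeff (Pnew Pa Pc Pm c1 c2) 1 = sP * (C0*D1 + C1*D0) + C0*D0 - (if e \<le> 1 then monom 1 c1 * coeff Pa (1-e) else 0)"
    "coeff (Pnew Pa Pc Pm c1 c2) 2 = sP * (C0*D2 + C1*D1 + C2*D0) + (C0*D1 + C1*D0) - (if e \<le> 2 then monom 1 c1 * coeff Pa (2-e) else 0)"
proof -
  have t: "TP * Pc * Pm = TP * (Pc * Pm)" by (simp add: mult.assoc)
  show "coeff (Pnew Pa Pc Pm c1 c2) 0 = sP * C0 * D0 - (if e = 0 then monom 1 c1 * coeff Pa 0 else 0)"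
    unfolding Pnew_def coeff_diff t coeff_TP_0 coeff_Mono_mult assms(7)[symmetric]
    using coeff_mult_012(1)[of Pc Pm] by (simp add: assms)
  show "coeff (Pnew Pa Pc Pm c1 c2) 1 = sP * (C0*D1 + C1*D0) + C0*D0 - (if e \<le> 1 then monom 1 c1 * coeff Pa (1-e) else 0)"
    unfolding Pnew_def coeff_diff t One_nat_def coeff_TP_Suc coeff_Mono_mult assms(7)[symmetric]
    using coeff_mult_012[of Pc Pm] by (simp add: assms)
  show "coeff (Pnew Pa Pc Pm c1 c2) 2 = sP * (C0*D2 + C1*D1 + C2*D0) + (C0*D1 + C1*D0) - (if e \<le> 2 then monom 1 c1 * coeff Pa (2-e) else 0)"
    unfolding Pnew_def coeff_diff t numeral_2_eq_2 coeff_TP_Suc coeff_Mono_mult assms(7)[symmetric]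
    using coeff_mult_012[of Pc Pm] by (simp add: assms numeral_2_eq_2)
qed

lemma Q_add: "Qp (m1+c1) (m2+c2) = Qp c1 c2 + Qp m1 m2 + Lp c1 c2 * Lp m1 m2 + sP * (Lp c1 c2 + Lp m1 m2)"
  by (simp add: Qp_def Lp_def sP_def algebra_simps field_simps)



definition lay :: "nat \<Rightarrow> nat \<Rightarrow> real poly poly \<Rightarrow> bool" where
  "lay p q P \<longleftrightarrow> coeff P 0 = sP^(p+q-1) \<and>
     (2 \<le> p+q \<longrightarrow> sP^2 * coeff P 1 = sP^(p+q-1) * Lp p q) \<and>
     (3 \<le> p+q \<longrightarrow> sP^4 * coeff P 2 = sP^(p+q-1) * Qp p q)"

lemma L_add: "Lp (m1+c1) (m2+c2) = Lp c1 c2 + Lp m1 m2 + sP"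
  by (simp add: Lp_def sP_def)

lemma lay_generic:
  assumes "lay c1 c2 Pc" "lay m1 m2 Pm" "3 \<le> c1+c2" "3 \<le> m1+m2"
  shows "lay (m1+c1) (m2+c2) (Pnew Pa Pc Pm c1 c2)"
proof -
  define nc where "nc = c1+c2-1"
  define nm where "nm = m1+m2-1"
  have nn: "m1+c1+(m2+c2)-1 = nc+nm+1" using assms(3,4) by (simp add: nc_def nm_def)
  have c0: "coeff Pc 0 = sP^nc" and c1: "sP^2 * coeff Pc 1 = sP^nc * Lp c1 c2"
    and c2: "sP^4 * coeff Pc 2 = sP^nc * Qp c1 c2"
    using assms(1,3) by (auto simp: lay_def nc_def)
  have d0: "coeff Pm 0 = sP^nm" and d1: "sP^2 * coeff Pm 1 = sP^nm * Lp m1 m2"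
    and d2: "sP^4 * coeff Pm 2 = sP^nm * Qp m1 m2"
    using assms(2,4) by (auto simp: lay_def nm_def)
  have e1: "\<not> c1 + c2 \<le> 1" "\<not> c1+c2 \<le> 2" "c1+c2 \<noteq> 0" using assms(3) by auto
  note co = Pnew_coeffs[OF refl]
  have N0: "coeff (Pnew Pa Pc Pm c1 c2) 0 = sP^(nc+nm+1)"
    unfolding co(1) using e1 c0 d0 by (simp add: power_add)
  have "sP^2 * coeff (Pnew Pa Pc Pm c1 c2) 1
      = sP * coeff Pc 0 * (sP^2 * coeff Pm 1) + sP * (sP^2 * coeff Pc 1) * coeff Pm 0 + sP^2 * coeff Pc 0 * coeff Pm 0"
    unfolding co(2) using e1 by (simp add: algebra_simps)
  also have "\<dots> = sP^(nc+nm+1) * (Lp c1 c2 + Lp m1 m2 + sP)"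
    unfolding c1 d1 c0 d0 by (simp add: power_add algebra_simps power2_eq_square)
  finally have N1: "sP^2 * coeff (Pnew Pa Pc Pm c1 c2) 1 = sP^(nc+nm+1) * Lp (m1+c1) (m2+c2)"
    by (simp add: L_add)
  have "sP^4 * coeff (Pnew Pa Pc Pm c1 c2) 2
      = sP * coeff Pc 0 * (sP^4 * coeff Pm 2) + sP * (sP^2 * coeff Pc 1) * (sP^2 * coeff Pm 1)
        + sP * (sP^4 * coeff Pc 2) * coeff Pm 0
        + sP^2 * coeff Pc 0 * (sP^2 * coeff Pm 1) + sP^2 * (sP^2 * coeff Pc 1) * coeff Pm 0"
    unfolding co(3) using e1 by (simp add: algebra_simps power2_eq_square power4_eq_xxxx)
  also have "\<dots> = sP^(nc+nm+1) * (Qp c1 c2 + Qp m1 m2 + Lp c1 c2 * Lp m1 m2 + sP * (Lp c1 c2 + Lp m1 m2))"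
    unfolding c1 d1 c2 d2 c0 d0 by (simp add: power_add algebra_simps power2_eq_square)
  finally have N2: "sP^4 * coeff (Pnew Pa Pc Pm c1 c2) 2 = sP^(nc+nm+1) * Qp (m1+c1) (m2+c2)"
    by (simp add: Q_add)
  show ?thesis unfolding lay_def nn using N0 N1 N2 by simp
qed



lemma sP_nz: "sP \<noteq> 0" by (simp add: sP_def)

lemma HD_coeff_zero: "HD n P \<Longrightarrow> n < k \<Longrightarrow> coeff P k = 0"
  unfolding HD_def by (intro poly_eqI) (metis add.commute coeff_0 le_add2 le_trans not_le)

lemma lay_chain01:
  assumes "lay 0 1 Pc" "HD 0 Pc" "lay 1 k Pa" "lay 1 (k+1) Pm" "1 \<le> k"
  shows "lay 1 (k+2) (Pnew Pa Pc Pm 0 1)"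
proof -
  have C0: "coeff Pc 0 = 1" using assms(1) by (simp add: lay_def)
  have C1: "coeff Pc 1 = 0" "coeff Pc 2 = 0" using HD_coeff_zero[OF assms(2)] by auto
  have a0: "coeff Pa 0 = sP^k" and a1: "sP^2 * coeff Pa 1 = sP^k * Lp 1 k"
    using assms(3,5) by (auto simp: lay_def)
  have d0: "coeff Pm 0 = sP^(k+1)" and d1: "sP^2 * coeff Pm 1 = sP^(k+1) * Lp 1 (k+1)"
    and d2: "sP^4 * coeff Pm 2 = sP^(k+1) * Qp 1 (k+1)"
    using assms(4,5) by (auto simp: lay_def)
  note co = Pnew_coeffs[OF refl]
  have N0: "coeff (Pnew Pa Pc Pm 0 1) 0 = sP^(k+2)"
    unfolding co(1) using C0 d0 by simp
  have "sP^2 * coeff (Pnew Pa Pc Pm 0 1) 1 = sP * (sP^2 * coeff Pm 1) + sP^2 * coeff Pm 0 - sP^2 * coeff Pa 0"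
    unfolding co(2) using C0 C1 by (simp add: algebra_simps)
  also have "\<dots> = sP^(k+2) * (Lp 1 (k+1) + sP - 1)"
    unfolding d1 d0 a0 by (simp add: algebra_simps power2_eq_square)
  also have "Lp 1 (k+1) + sP - 1 = Lp 1 (k+2)" by (simp add: Lp_def sP_def one_pCons)
  finally have N1: "sP^2 * coeff (Pnew Pa Pc Pm 0 1) 1 = sP^(k+2) * Lp 1 (k+2)" .
  have "sP^4 * coeff (Pnew Pa Pc Pm 0 1) 2 = sP * (sP^4 * coeff Pm 2) + sP^2 * (sP^2 * coeff Pm 1) - sP^2 * (sP^2 * coeff Pa 1)"
    unfolding co(3) using C0 C1 by (simp add: algebra_simps power4_eq_xxxx power2_eq_square)
  also have "\<dots> = sP^(k+2) * (Qp 1 (k+1) + sP * Lp 1 (k+1) - Lp 1 k)"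
    unfolding d1 d2 a1 by (simp add: algebra_simps power2_eq_square)
  also have "Qp 1 (k+1) + sP * Lp 1 (k+1) - Lp 1 k = Qp 1 (k+2)"
    by (simp add: Qp_def Lp_def sP_def algebra_simps field_simps)
  finally have N2: "sP^4 * coeff (Pnew Pa Pc Pm 0 1) 2 = sP^(k+2) * Qp 1 (k+2)" .
  have nn: "1 + (k+2) - 1 = k+2" by simp
  show ?thesis unfolding lay_def nn using N0 N1 N2 by simp
qed

lemma lay_chain11:
  assumes "lay 1 1 Pc" "HD 1 Pc" "lay m (m+1) Pa" "lay (m+1) (m+2) Pm"
  shows "lay (m+2) (m+3) (Pnew Pa Pc Pm 1 1)"
proof -
  have C0: "coeff Pc 0 = sP" using assms(1) by (simp add: lay_def)
  have "sP^2 * coeff Pc 1 = 0" using assms(1) by (simp add: lay_def Lp_def)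
  then have C1: "coeff Pc 1 = 0" by (simp add: sP_nz)
  have C2: "coeff Pc 2 = 0" using HD_coeff_zero[OF assms(2)] by auto
  have a0: "coeff Pa 0 = sP^(2*m)"
    using assms(3) by (auto simp: lay_def mult_2)
  have d0: "coeff Pm 0 = sP^(2*m+2)" and d1: "sP^2 * coeff Pm 1 = sP^(2*m+2) * Lp (m+1) (m+2)"
    and d2: "sP^4 * coeff Pm 2 = sP^(2*m+2) * Qp (m+1) (m+2)"
    using assms(4) by (auto simp: lay_def mult_2)
  note co = Pnew_coeffs[OF refl]
  have N0: "coeff (Pnew Pa Pc Pm 1 1) 0 = sP^(2*m+4)"
    unfolding co(1) using C0 d0 by (simp add: power_add power2_eq_square power4_eq_xxxx)
  have "sP^2 * coeff (Pnew Pa Pc Pm 1 1) 1 = sP^2 * (sP^2 * coeff Pm 1) + sP^3 * coeff Pm 0"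
    unfolding co(2) using C0 C1 by (simp add: algebra_simps power2_eq_square power3_eq_cube)
  also have "\<dots> = sP^(2*m+4) * (Lp (m+1) (m+2) + sP)"
    unfolding d1 d0 by (simp add: algebra_simps power2_eq_square power3_eq_cube power_add power4_eq_xxxx)
  also have "Lp (m+1) (m+2) + sP = Lp (m+2) (m+3)" by (simp add: Lp_def sP_def)
  finally have N1: "sP^2 * coeff (Pnew Pa Pc Pm 1 1) 1 = sP^(2*m+4) * Lp (m+2) (m+3)" .
  have "sP^4 * coeff (Pnew Pa Pc Pm 1 1) 2 = sP^2 * (sP^4 * coeff Pm 2) + sP^3 * (sP^2 * coeff Pm 1) - sP^4 * monom 1 1 * coeff Pa 0"
    unfolding co(3) using C0 C1 C2 by (simp add: algebra_simps power4_eq_xxxx power2_eq_square power3_eq_cube)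
  also have "\<dots> = sP^(2*m+4) * (Qp (m+1) (m+2) + sP * Lp (m+1) (m+2) - monom 1 1)"
    unfolding d1 d2 a0 by (simp add: algebra_simps power2_eq_square power3_eq_cube power4_eq_xxxx power_add)
  also have "Qp (m+1) (m+2) + sP * Lp (m+1) (m+2) - monom 1 1 = Qp (m+2) (m+3)"
    by (simp add: Qp_def Lp_def sP_def algebra_simps field_simps monom_altdef)
  finally have N2: "sP^4 * coeff (Pnew Pa Pc Pm 1 1) 2 = sP^(2*m+4) * Qp (m+2) (m+3)" .
  have nn: "m + 2 + (m + 3) - 1 = 2*m+4" by simp
  show ?thesis unfolding lay_def nn using N0 N1 N2 by simp
qed

definition P11 :: "real poly poly" where "P11 = [:sP:]"

lemma lay_01: "lay 0 1 1" by (simp add: lay_def)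
lemma lay_10: "lay 1 0 1" by (simp add: lay_def)
lemma lay_11: "lay 1 1 P11" by (simp add: lay_def P11_def Lp_def)
lemma HD_11: "HD 1 P11"
  unfolding HD_def P11_def sP_def by (auto simp: coeff_pCons split: nat.splits if_splits)
lemma lay_12: "lay 1 2 (Pnew 1 1 P11 0 1)"
proof -
  note co = Pnew_coeffs[OF refl]
  have N0: "coeff (Pnew 1 1 P11 0 1) 0 = sP^2"
    unfolding co(1) by (simp add: P11_def power2_eq_square)
  have N1: "coeff (Pnew 1 1 P11 0 1) 1 = [:0,1:]"
    unfolding co(2) by (simp add: P11_def sP_def one_pCons)
  have N2: "coeff (Pnew 1 1 P11 0 1) 2 = 0"
    unfolding co(3) by (simp add: P11_def numeral_2_eq_2)
  show ?thesis unfolding lay_def using N0 N1 N2 by (simp add: Lp_def Qp_def power2_eq_square)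
qed



lemma coprime_of_det:
  assumes "\<bar>int c * int q - int d * int p\<bar> = 1"
  shows "coprime p q"
proof (rule coprimeI)
  fix k assume "k dvd p" "k dvd q"
  then have "int k dvd int c * int q - int d * int p" by (simp add: dvd_diff)
  then have "int k dvd \<bar>int c * int q - int d * int p\<bar>" by simp
  then have "int k dvd 1" using assms by simp
  then show "is_unit k" by simp
qed

lemma nb_facts:
  assumes "r1*l2 = l1*r2 + (1::nat)" "r1 \<le> r2"
  shows "frac_dom (l1,l2)" "frac_dom (r1,r2)" "frac_dom (l1+r1, l2+r2)"
    "l1 < l2" "1 \<le> r1" "1 \<le> l2"
proof -
  have i: "int r1 * int l2 = int l1 * int r2 + 1" using assms(1) by (metis of_nat_add of_nat_mult of_nat_1)
  have r1: "1 \<le> r1" using assms(1) by (cases r1) auto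
  show "1 \<le> r1" by fact
  show l2: "1 \<le> l2" using assms(1) by (cases l2) auto
  have "int l1 < int l2"
  proof (rule ccontr)
    assume "\<not> int l1 < int l2"
    then have "int l2 * int r2 \<le> int l1 * int r2" by (intro mult_right_mono) auto
    moreover have "int r1 * int l2 \<le> int r2 * int l2" using assms(2) by (intro mult_right_mono) auto
    ultimately show False using i by (simp add: algebra_simps)
  qed
  then show ll: "l1 < l2" by simp
  have cl: "coprime l1 l2"
    by (rule coprime_of_det[where c=r1 and d=r2]) (use i in \<open>simp add: algebra_simps\<close>)
  have cr: "coprime r1 r2"
    by (rule coprime_of_det[where c=l1 and d=l2]) (use i in \<open>simp add: algebra_simps\<close>)
  have cs: "coprime (l1+r1) (l2+r2)"
    by (rule coprime_of_det[where c=l1 and d=l2]) (use i in \<open>simp add: algebra_simps\<close>)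
  show "frac_dom (l1,l2)" using cl ll l2 by (simp add: frac_dom_def)
  show "frac_dom (r1,r2)" using cr r1 assms(2) by (simp add: frac_dom_def)
  show "frac_dom (l1+r1, l2+r2)" using cs ll assms(2) l2 by (simp add: frac_dom_def)
qed

lemma nb_cases:
  assumes "r1*l2 = l1*r2 + (1::nat)" "r1 \<le> r2"
  shows "(l1 = 0 \<and> l2 = 1 \<and> r1 = 1 \<and> r2 = 1) \<or>
         (l1 \<le> r1 \<and> l2 \<le> r2 \<and> r1 - l1 \<le> r2 - l2 \<and> (r1-l1)*l2 = l1*(r2-l2) + 1) \<or>
         (r1 \<le> l1 \<and> r2 \<le> l2 \<and> r1*(l2-r2) = (l1-r1)*r2 + 1)"
proof -
  have i: "int r1 * int l2 = int l1 * int r2 + 1" using assms(1) by (metis of_nat_add of_nat_mult of_nat_1)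
  have f: "l1 < l2" "1 \<le> r1" "1 \<le> l2" using nb_facts[OF assms] by auto
  consider "l1 \<le> r1 \<and> l2 \<le> r2" | "r1 \<le> l1 \<and> r2 \<le> l2" | "l1 < r1 \<and> r2 < l2" | "r1 < l1 \<and> l2 < r2"
    by linarith
  then show ?thesis
  proof cases
    case 1
    show ?thesis
    proof (cases "r2 = l2")
      case True
      then have "(int r1 - int l1) * int l2 = 1" using i by (simp add: algebra_simps)
      then have "int l2 = 1" "int r1 - int l1 = 1" using f by (auto simp: zmult_eq_1_iff)
      then show ?thesis using True f by auto
    next
      case False
      then have r2l2: "int r2 - int l2 \<ge> 1" using 1 by linarith
      have "int r1 - int l1 \<le> int r2 - int l2"
      proof (rule ccontr)
        assume "\<not> ?thesis"
        then have h: "int r1 - int l1 \<ge> int r2 - int l2 + 1" by linarith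
        have e: "(int r1 - int l1) * int l2 - int l1 * (int r2 - int l2) = 1" using i by (simp add: algebra_simps)
        have "(int r1 - int l1) * int l2 \<ge> (int r2 - int l2 + 1) * int l2"
          using h f by (intro mult_right_mono) auto
        moreover have "int l1 * (int r2 - int l2) \<le> (int l2 - 1) * (int r2 - int l2)"
          using f r2l2 by (intro mult_right_mono) auto
        ultimately have "1 \<ge> (int r2 - int l2 + 1) * int l2 - (int l2 - 1) * (int r2 - int l2)"
          using e by linarith
        then have "1 \<ge> int r2 - int l2 + int l2" by (simp add: algebra_simps)
        then show False using r2l2 f by linarith
      qed
      then have "r1 - l1 \<le> r2 - l2" using 1 by linarith
      moreover have "(r1-l1)*l2 = l1*(r2-l2) + 1"
      proof -
        have "int ((r1-l1)*l2) = int (l1*(r2-l2) + 1)" using 1 i by (simp add: of_nat_diff algebra_simps)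
        then show ?thesis by (simp only: of_nat_eq_iff)
      qed
      ultimately show ?thesis using 1 by auto
    qed
  next
    case 2
    have "int (r1*(l2-r2)) = int ((l1-r1)*r2 + 1)" using 2 i by (simp add: of_nat_diff algebra_simps)
    then show ?thesis using 2 by (simp only: of_nat_eq_iff) auto
  next
    case 3
    have "int r1 * int l2 \<ge> int r1 * (int r2 + 1)" using 3 f by (intro mult_left_mono) auto
    moreover have "int l1 * int r2 \<le> (int r1 - 1) * int r2" using 3 by (intro mult_right_mono) auto
    ultimately have "int r1 + int r2 \<le> 1 + int r2 * 0 + int r2 * 0" using i by (simp add: algebra_simps)
    then show ?thesis using 3 f assms(2) by linarith
  next
    case 4
    have "int r1 * int l2 \<le> int r1 * int r2" using 4 by (intro mult_left_mono) auto
    moreover have "int r1 * int r2 < int l1 * int r2" using 4 f by (intro mult_strict_right_mono) auto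
    ultimately show ?thesis using i by linarith
  qed
qed

lemma nb_exists:
  assumes "coprime a b" "1 \<le> a" "a < (b::nat)"
  shows "\<exists>l1 l2 r1 r2. l1 + r1 = a \<and> l2 + r2 = b \<and> r1*l2 = l1*r2 + 1 \<and> r1 \<le> r2"
proof -
  obtain x y where xy: "a * x = b * y + gcd a b" using bezout_nat[of a b] assms(2) by auto
  then have xy1: "a * x = b * y + 1" using assms(1) by simp
  define l2 where "l2 = x mod b"
  have b2: "b \<ge> 2" using assms by linarith
  have "(a * l2) mod b = (a*x) mod b" unfolding l2_def by (simp add: mod_mult_right_eq)
  also have "\<dots> = 1" using xy1 b2 by (simp add: mod_Suc)
  finally have m: "(a*l2) mod b = 1" .
  define l1 where "l1 = (a*l2) div b"
  have e: "a * l2 = b * l1 + 1" using m unfolding l1_def by (metis div_mult_mod_eq add.commute mult.commute)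
  have l2b: "l2 < b" unfolding l2_def using b2 by simp
  have l21: "1 \<le> l2" using m by (cases l2) auto
  have "a * l2 < a * b" using l2b assms(2) by simp
  then have "b * l1 < a * b" using e by linarith
  then have "b * l1 < b * a" by (simp add: mult.commute)
  then have l1a: "l1 < a" using b2 by simp
  define r1 where "r1 = a - l1"
  define r2 where "r2 = b - l2"
  have ie: "int a * int l2 = int b * int l1 + 1" using e by (metis of_nat_add of_nat_mult of_nat_1)
  have "int r1 * int l2 = int l1 * int r2 + 1"
    using ie l1a l2b by (simp add: r1_def r2_def of_nat_diff algebra_simps)
  then have d: "r1*l2 = l1*r2 + 1" by (metis of_nat_add of_nat_mult of_nat_1 of_nat_eq_iff)
  have "int b * (int a - int l1) \<le> int b * (int b - int l2)"
  proof -
    have "(int b - int a) * (int b - 1 - int l2) \<ge> 0" using assms l2b by (intro mult_nonneg_nonneg) auto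
    then show ?thesis using ie assms(3) by (simp add: algebra_simps; linarith)
  qed
  then have "int a - int l1 \<le> int b - int l2" using b2 by (simp add: mult_le_cancel_left)
  then have "r1 \<le> r2" using l1a l2b by (simp add: r1_def r2_def)
  then show ?thesis using d l1a l2b by (intro exI[of _ l1] exI[of _ l2] exI[of _ r1] exI[of _ r2]) (simp add: r1_def r2_def)
qed



definition validd :: "nat \<Rightarrow> nat \<Rightarrow> nat \<times> nat \<times> nat \<times> nat \<Rightarrow> bool" where
  "validd p q t \<longleftrightarrow> frac_dom (fst t, fst (snd t)) \<and> frac_dom (fst (snd (snd t)), snd (snd (snd t))) \<and>
     \<bar>int (fst t) * int (snd (snd (snd t))) - int (fst (snd t)) * int (fst (snd (snd t)))\<bar> = 1 \<and>
     p = fst t + 2 * fst (snd (snd t)) \<and> q = fst (snd t) + 2 * snd (snd (snd t))"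

lemma validd_simp: "validd p q (a,b,c,d) \<longleftrightarrow> frac_dom (a,b) \<and> frac_dom (c,d) \<and>
     \<bar>int a * int d - int b * int c\<bar> = 1 \<and> p = a + 2*c \<and> q = b + 2*d"
  by (simp add: validd_def)

lemma frac_dom_0: "frac_dom (0,b) \<Longrightarrow> b = 1"
  by (auto simp: frac_dom_def)
lemma frac_dom_00: "\<not> frac_dom (0,0)"
  by (auto simp: frac_dom_def)

lemma dvd_small_int: "(P::int) dvd X \<Longrightarrow> \<bar>X\<bar> < P \<Longrightarrow> X = 0"
  by (metis dvd_imp_le_int abs_ge_self not_le order.strict_trans2 abs_of_nonneg abs_le_D1 less_imp_le)

lemma dec_unique:
  assumes "validd p q (a,b,c,d)" "validd p q (a',b',c',d')"
  shows "(a,b,c,d) = (a',b',c',d')"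
proof -
  have fa: "frac_dom (a,b)" "frac_dom (c,d)" "frac_dom (a',b')" "frac_dom (c',d')"
    and e: "\<bar>int a * int d - int b * int c\<bar> = 1" "\<bar>int a' * int d' - int b' * int c'\<bar> = 1"
    and pq: "p = a + 2*c" "q = b + 2*d" "p = a' + 2*c'" "q = b' + 2*d'"
    using assms by (auto simp: validd_simp)
  have cop: "coprime p q"
    by (rule coprime_of_det[where c=c and d=d]) (use e(1) pq in \<open>simp add: algebra_simps abs_minus_commute\<close>)
  then have copi: "coprime (int p) (int q)" by simp
  have p1: "p \<ge> 1"
  proof (rule ccontr)
    assume "\<not> p \<ge> 1"
    then have "a = 0" "c = 0" using pq by auto
    then have "b = 1" "d = 1" using fa frac_dom_0 by auto
    then show False using e(1) \<open>a = 0\<close> \<open>c = 0\<close> by simp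
  qed
  have E1: "int c * int q - int d * int p = int b * int c - int a * int d" by (simp add: pq(1,2) algebra_simps)
  have E2: "int c' * int q - int d' * int p = int b' * int c' - int a' * int d'" by (simp add: pq(3,4) algebra_simps)
  have X1: "\<bar>int c * int q - int d * int p\<bar> = 1" unfolding E1 using e(1) by (simp add: abs_minus_commute)
  have X2: "\<bar>int c' * int q - int d' * int p\<bar> = 1" unfolding E2 using e(2) by (simp add: abs_minus_commute)
  have pm: "\<And>X Y::int. \<bar>X\<bar> = 1 \<Longrightarrow> \<bar>Y\<bar> = 1 \<Longrightarrow> X = Y \<or> X = - Y" by (auto simp: abs_if split: if_splits)
  consider "int c * int q - int d * int p = int c' * int q - int d' * int p"
    | "int c * int q - int d * int p = - (int c' * int q - int d' * int p)"
    using pm[OF X1 X2] by blast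
  then show ?thesis
  proof cases
    case 1
    then have h: "(int c - int c') * int q = (int d - int d') * int p" by (simp add: algebra_simps)
    then have "int p dvd (int c - int c') * int q" by simp
    then have "int p dvd (int c - int c')" using copi by (simp add: coprime_dvd_mult_left_iff)
    moreover have "\<bar>int c - int c'\<bar> < int p" using pq p1 by linarith
    ultimately have "int c - int c' = 0" by (rule dvd_small_int)
    then have cc: "c = c'" by simp
    then have "(int d - int d') * int p = 0" using h by simp
    then have "d = d'" using p1 by simp
    then show ?thesis using cc pq by auto
  next
    case 2
    then have h: "(int c + int c') * int q = (int d + int d') * int p" by (simp add: algebra_simps)
    then have "int p dvd (int c + int c') * int q" by simp
    then have dv: "int p dvd (int c + int c')" using copi by (simp add: coprime_dvd_mult_left_iff)
    show ?thesis
    proof (cases "int c + int c' = int p")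
      case True
      then have "(int d + int d') * int p = int q * int p" using h by (simp add: algebra_simps)
      then have "int d + int d' = int q" using p1 by simp
      then have "a = 0" "b = 0" using True pq by linarith+
      then show ?thesis using fa frac_dom_00 by simp
    next
      case False
      have "\<bar>int c + int c'\<bar> < int p" using False pq by linarith
      with dv have "int c + int c' = 0" by (rule dvd_small_int)
      then have "c = 0" "c' = 0" by auto
      then have "(int d + int d') * int p = 0" using h by simp
      then have "d = 0" using p1 by simp
      then show ?thesis using fa(2) \<open>c = 0\<close> frac_dom_00 by simp
    qed
  qed
qed

lemma dec_exists:
  assumes "frac_dom (p,q)" "(p,q) \<noteq> (1,0)" "(p,q) \<noteq> (0,1)" "(p,q) \<noteq> (1,1)"
  shows "\<exists>t. validd p q t"
proof -
  have q1: "q \<ge> 1" and pq: "p \<le> q" and cop: "coprime p q" using assms(1,2) by (auto simp: frac_dom_def)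
  have p1: "p \<ge> 1" using assms(3) cop q1 by (cases p) auto
  have pq': "p < q" using assms(4) cop pq p1 by (cases "p = q") auto
  obtain l1 l2 r1 r2 where nb: "l1 + r1 = p" "l2 + r2 = q" "r1*l2 = l1*r2 + 1" "r1 \<le> r2"
    using nb_exists[OF cop p1 pq'] by blast
  note cs = nb_cases[OF nb(3,4)]
  have i: "int r1 * int l2 = int l1 * int r2 + 1" using nb(3) by (metis of_nat_add of_nat_mult of_nat_1)
  from cs show ?thesis
  proof (elim disjE conjE)
    assume "l1 = 0" "l2 = 1" "r1 = 1" "r2 = 1"
    then have "p = 1" "q = 2" using nb by auto
    then have "validd p q (1,0,0,1)" by (simp add: validd_simp frac_dom_def)
    then show ?thesis by blast
  next
    assume h: "l1 \<le> r1" "l2 \<le> r2" "r1 - l1 \<le> r2 - l2" "(r1 - l1) * l2 = l1 * (r2 - l2) + 1"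
    have "frac_dom (l1,l2)" "frac_dom (r1-l1, r2-l2)" using nb_facts[OF h(4,3)] by auto
    moreover have "\<bar>int (r1-l1) * int l2 - int (r2-l2) * int l1\<bar> = 1"
      using h i by (simp add: of_nat_diff algebra_simps)
    ultimately have "validd p q (r1-l1, r2-l2, l1, l2)" using nb h by (simp add: validd_simp)
    then show ?thesis by blast
  next
    assume h: "r1 \<le> l1" "r2 \<le> l2" "r1 * (l2 - r2) = (l1 - r1) * r2 + 1"
    have "frac_dom (l1-r1,l2-r2)" "frac_dom (r1, r2)" using nb_facts[OF h(3) nb(4)] by auto
    moreover have "\<bar>int (l1-r1) * int r2 - int (l2-r2) * int r1\<bar> = 1"
      using h i by (simp add: of_nat_diff algebra_simps)
    ultimately have "validd p q (l1-r1, l2-r2, r1, r2)" using nb h by (simp add: validd_simp)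
    then show ?thesis by blast
  qed
qed

definition decp :: "nat \<Rightarrow> nat \<Rightarrow> nat \<times> nat \<times> nat \<times> nat" where
  "decp p q = (SOME t. validd p q t)"

lemma validd_smaller:
  assumes "validd p q t"
  shows "fst (snd (snd t)) + snd (snd (snd t)) < p + q"
        "fst t + fst (snd (snd t)) + (fst (snd t) + snd (snd (snd t))) < p + q"
        "fst t + fst (snd t) < p + q"
proof -
  obtain a b c d where t: "t = (a,b,c,d)" by (cases t) auto
  have v: "frac_dom (a,b)" "frac_dom (c,d)" "p = a + 2*c" "q = b + 2*d"
    using assms by (auto simp: t validd_simp)
  have "a + b \<ge> 1" "c + d \<ge> 1" using v(1,2) by (auto simp: frac_dom_def)
  then show "fst (snd (snd t)) + snd (snd (snd t)) < p + q"
        "fst t + fst (snd (snd t)) + (fst (snd t) + snd (snd (snd t))) < p + q"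
        "fst t + fst (snd t) < p + q" using v by (auto simp: t)
qed

function mk :: "nat \<Rightarrow> nat \<Rightarrow> real \<Rightarrow> real \<Rightarrow> real \<Rightarrow> real" where
  "mk p q x y z = (if (p,q) = (1,0) then y else if (p,q) = (0,1) then x
     else if (p,q) = (1,1) then (x^2+y^2)/z
     else if frac_dom (p,q) \<and> validd p q (decp p q) then
       ((mk (fst (snd (snd (decp p q)))) (snd (snd (snd (decp p q)))) x y z)^2
        + (mk (fst (decp p q) + fst (snd (snd (decp p q)))) (fst (snd (decp p q)) + snd (snd (snd (decp p q)))) x y z)^2)
       / mk (fst (decp p q)) (fst (snd (decp p q))) x y z
     else 0)"
  by pat_completeness auto
termination
  by (relation "measure (\<lambda>(p,q,x,y,z). p+q)") (auto dest: validd_smaller)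

declare mk.simps[simp del]

definition mkF :: "nat \<times> nat \<Rightarrow> real \<Rightarrow> real \<Rightarrow> real \<Rightarrow> real" where
  "mkF pq = mk (fst pq) (snd pq)"

lemma target_facts:
  assumes "frac_dom (a,b)" "frac_dom (c,d)" "\<bar>int a * int d - int b * int c\<bar> = 1" "a + 2*c \<le> b + 2*d"
  shows "frac_dom (a+2*c, b+2*d)" "(a+2*c, b+2*d) \<noteq> (1,0)" "(a+2*c, b+2*d) \<noteq> (0,1)" "(a+2*c, b+2*d) \<noteq> (1,1)"
proof -
  have nz: "b + 2*d \<noteq> 0"
  proof
    assume "b + 2*d = 0"
    then have "b = 0" "d = 0" by auto
    then show False using assms(1,2,3) by (auto simp: frac_dom_def)
  qed
  have cop: "coprime (a+2*c) (b+2*d)"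
    by (rule coprime_of_det[where c=c and d=d]) (use assms(3) in \<open>simp add: algebra_simps abs_minus_commute\<close>)
  have "b + 2*d \<ge> 1" using nz by linarith
  then show "frac_dom (a+2*c, b+2*d)" using cop assms(4) by (simp add: frac_dom_def)
  show "(a+2*c, b+2*d) \<noteq> (1,0)" using nz by simp
  show "(a+2*c, b+2*d) \<noteq> (0,1)"
  proof
    assume "(a+2*c, b+2*d) = (0,1)"
    then have "a = 0" "c = 0" by auto
    then have "b = 1" "d = 1" using assms(1,2) frac_dom_0 by auto
    then show False using assms(3) \<open>a = 0\<close> \<open>c = 0\<close> by simp
  qed
  show "(a+2*c, b+2*d) \<noteq> (1,1)"
  proof
    assume "(a+2*c, b+2*d) = (1,1)"
    then have "c = 0" "d = 0" by auto
    then show False using assms(2) frac_dom_00 by simp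
  qed
qed

lemma mkF_family: "markov_family mkF"
  unfolding markov_family_def
proof (intro conjI allI impI)
  fix p assume "\<not> frac_dom p"
  moreover have "frac_dom (1,0)" "frac_dom (0,1)" "frac_dom (1,1)" by (auto simp: frac_dom_def)
  ultimately show "mkF p = (\<lambda>x y z. 0)"
    unfolding mkF_def by (intro ext) (subst mk.simps, auto)
next
  show "mkF (1,0) = (\<lambda>x y z. y)" unfolding mkF_def by (intro ext) (subst mk.simps, simp)
  show "mkF (0,1) = (\<lambda>x y z. x)" unfolding mkF_def by (intro ext) (subst mk.simps, simp)
  show "mkF (1,1) = (\<lambda>x y z. (x^2+y^2)/z)" unfolding mkF_def by (intro ext) (subst mk.simps, simp)
next
  fix a b c d
  assume h: "frac_dom (a, b) \<and> frac_dom (c, d) \<and> \<bar>int a * int d - int b * int c\<bar> = 1 \<and> a + 2 * c \<le> b + 2 * d"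
  have tf: "frac_dom (a+2*c, b+2*d)" "(a+2*c, b+2*d) \<noteq> (1,0)" "(a+2*c, b+2*d) \<noteq> (0,1)" "(a+2*c, b+2*d) \<noteq> (1,1)"
    using target_facts[of a b c d] h by blast+
  have v: "validd (a+2*c) (b+2*d) (a,b,c,d)" using h by (simp add: validd_simp)
  then have "validd (a+2*c) (b+2*d) (decp (a+2*c) (b+2*d))" unfolding decp_def by (rule someI)
  then have dp: "decp (a+2*c) (b+2*d) = (a,b,c,d)" using dec_unique v by (metis prod.collapse)
  show "mkF (a + 2 * c, b + 2 * d) = (\<lambda>x y z. ((mkF (c, d) x y z)\<^sup>2 + (mkF (a + c, b + d) x y z)\<^sup>2) / mkF (a, b) x y z)"
    unfolding mkF_def
  proof (intro ext)
    fix x y z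
    show "mk (fst (a + 2 * c, b + 2 * d)) (snd (a + 2 * c, b + 2 * d)) x y z =
         ((mk (fst (c, d)) (snd (c, d)) x y z)\<^sup>2 + (mk (fst (a + c, b + d)) (snd (a + c, b + d)) x y z)\<^sup>2) /
         mk (fst (a, b)) (snd (a, b)) x y z"
      apply (subst mk.simps)
      using tf v dp by (simp only: fst_conv snd_conv if_False if_True simp_thms)
  qed
qed

lemma family_unique:
  assumes "markov_family F" "markov_family G"
  shows "F = G"
proof -
  have "\<forall>p q. p + q \<le> n \<longrightarrow> F (p,q) = G (p,q)" for n
  proof (induction n rule: less_induct)
    case (less n)
    show ?case
    proof (intro allI impI)
      fix p q assume pqn: "p + q \<le> n"
      show "F (p,q) = G (p,q)"
      proof (cases "frac_dom (p,q) \<and> (p,q) \<noteq> (1,0) \<and> (p,q) \<noteq> (0,1) \<and> (p,q) \<noteq> (1,1)")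
        case False
        then show ?thesis using assms unfolding markov_family_def by metis
      next
        case True
        then obtain t where v: "validd p q t" using dec_exists by blast
        obtain a b c d where t: "t = (a,b,c,d)" by (cases t) auto
        have vv: "frac_dom (a,b)" "frac_dom (c,d)" "\<bar>int a * int d - int b * int c\<bar> = 1" "p = a + 2*c" "q = b + 2*d"
          using v by (auto simp: t validd_simp)
        have "p \<le> q" using True by (auto simp: frac_dom_def)
        then have le: "a + 2*c \<le> b + 2*d" using vv by simp
        have sm: "c + d < n" "a + c + (b + d) < n" "a + b < n" using validd_smaller[OF v] pqn by (auto simp: t)
        have "F (c,d) = G (c,d)" "F (a+c,b+d) = G (a+c,b+d)" "F (a,b) = G (a,b)"
          using less sm by auto
        moreover have "F (p,q) = (\<lambda>x y z. ((F (c,d) x y z)^2 + (F (a+c,b+d) x y z)^2) / F (a,b) x y z)"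
          using assms(1) vv le unfolding markov_family_def by blast
        moreover have "G (p,q) = (\<lambda>x y z. ((G (c,d) x y z)^2 + (G (a+c,b+d) x y z)^2) / G (a,b) x y z)"
          using assms(2) vv le unfolding markov_family_def by blast
        ultimately show ?thesis by simp
      qed
    qed
  qed
  then show ?thesis by (intro ext) (metis le_refl prod.collapse)
qed

lemma markovM_family: "markov_family markovM"
proof -
  have "\<exists>!F. markov_family F" using mkF_family family_unique by blast
  then show ?thesis unfolding markovM_def by (rule theI')
qed



definition goodr :: "nat \<Rightarrow> nat \<Rightarrow> real poly poly \<Rightarrow> bool" where
  "goodr p q P \<longleftrightarrow> HD (p+q-1) P \<and> (\<forall>x y z. 0 < x \<longrightarrow> 0 < y \<longrightarrow> 0 < z \<longrightarrow>
      0 < markovM (p,q) x y z \<and>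
      markovM (p,q) x y z * (x^p * y^q * z^(p+q)) = x*y*z * Phom (p+q-1) P (x^2) (y^2) (z^2))"

definition meq :: "(real \<Rightarrow> real \<Rightarrow> real \<Rightarrow> real) \<Rightarrow> (real \<Rightarrow> real \<Rightarrow> real \<Rightarrow> real) \<Rightarrow> (real \<Rightarrow> real \<Rightarrow> real \<Rightarrow> real) \<Rightarrow> bool" where
  "meq A B C \<longleftrightarrow> (\<forall>x y z. 0 < x \<longrightarrow> 0 < y \<longrightarrow> 0 < z \<longrightarrow>
      (A x y z)^2 + (B x y z)^2 + (C x y z)^2 = (x^2+y^2+z^2)/(x*y*z) * A x y z * B x y z * C x y z)"

lemma meq_perm: "meq A B C \<Longrightarrow> meq B A C" "meq A B C \<Longrightarrow> meq A C B"
  unfolding meq_def by (auto simp: algebra_simps)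

lemma rec_M:
  assumes "frac_dom (a,b)" "frac_dom (c,d)" "\<bar>int a * int d - int b * int c\<bar> = 1" "a + 2*c \<le> b + 2*d"
  shows "markovM (a+2*c, b+2*d) x y z = ((markovM (c,d) x y z)^2 + (markovM (a+c,b+d) x y z)^2) / markovM (a,b) x y z"
proof -
  note R = markovM_family[unfolded markov_family_def, THEN conjunct2, THEN conjunct2, THEN conjunct2, THEN conjunct2]
  have "markovM (a+2*c, b+2*d) = (\<lambda>x y z. ((markovM (c,d) x y z)^2 + (markovM (a+c,b+d) x y z)^2) / markovM (a,b) x y z)"
    using R assms by blast
  then show ?thesis by simp
qed

lemma mutation:
  fixes A B C N K :: real
  assumes "A^2 + B^2 + C^2 = K * A * B * C" "A \<noteq> 0" "N = (B^2 + C^2)/A"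
  shows "N = K * B * C - A" "B^2 + C^2 + N^2 = K * B * C * N"
proof -
  have AN: "A * N = B^2 + C^2" using assms(2,3) by simp
  then have "K * B * C * A = A * A + A * N" using assms(1) by (simp add: algebra_simps power2_eq_square)
  then have "K * B * C = A + N" using assms(2) by (simp add: algebra_simps) (metis mult.commute mult_left_cancel distrib_left)
  then show "N = K * B * C - A" by simp
  show "B^2 + C^2 + N^2 = K * B * C * N" using AN \<open>K * B * C = A + N\<close> by (simp add: algebra_simps power2_eq_square)
qed

lemma rep_alg:
  fixes t S Mc Mm Ma Mn Xa Xc Hc Hm Ha :: real
  assumes "t \<noteq> 0" "Mc * Xc = t * Hc" "Mm * (Xa * Xc) = t * Hm" "Ma * Xa = t * Ha" "Mn = S / t * Mc * Mm - Ma"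
  shows "Mn * (Xa * Xc^2) = t * (S * Hc * Hm - Xc^2 * Ha)"
proof -
  have "Mn * (Xa * Xc^2) = S / t * (Mc * Xc) * (Mm * (Xa * Xc)) - (Ma * Xa) * Xc^2"
    by (simp add: assms(5) algebra_simps power2_eq_square)
  also have "\<dots> = S / t * (t * Hc) * (t * Hm) - (t * Ha) * Xc^2" by (simp only: assms(2,3,4))
  also have "\<dots> = t * (S * Hc * Hm - Xc^2 * Ha)" using assms(1) by (simp add: field_simps power2_eq_square)
  finally show ?thesis .
qed

lemma step_rep:
  assumes ga: "goodr a1 a2 Pa" and gc: "goodr c1 c2 Pc" and gm: "goodr m1 m2 Pm"
    and m: "m1 = a1 + c1" "m2 = a2 + c2" and n: "n1 = a1 + 2*c1" "n2 = a2 + 2*c2"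
    and sa: "1 \<le> a1 + a2" and sc: "1 \<le> c1 + c2"
    and mq: "meq (markovM (a1,a2)) (markovM (c1,c2)) (markovM (m1,m2))"
    and rc: "\<And>x y z. markovM (n1,n2) x y z = ((markovM (c1,c2) x y z)^2 + (markovM (m1,m2) x y z)^2) / markovM (a1,a2) x y z"
  shows "goodr n1 n2 (Pnew Pa Pc Pm c1 c2)" "meq (markovM (c1,c2)) (markovM (m1,m2)) (markovM (n1,n2))"
proof -
  define na nc nm nn where "na = a1+a2-1" "nc = c1+c2-1" "nm = m1+m2-1" "nn = n1+n2-1"
  have nn1: "nn = (1 + nc) + nm" and nn2: "nn = 2*(c1+c2) + na" using sa sc m n by (auto simp: na_nc_nm_nn_def)
  have HDa: "HD na Pa" and HDc: "HD nc Pc" and HDm: "HD nm Pm"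
    using ga gc gm by (auto simp: goodr_def na_nc_nm_nn_def)
  have "HD nn (TP * Pc * Pm)" unfolding nn1 by (intro HD_mult HD_T HDc HDm)
  moreover have "HD nn (Mono c1 (c1+c2) * Pa)"
    by (rule HD_mono[OF HD_mult[OF HD_Mono HDa]]) (simp add: nn2)
  ultimately have HDn: "HD nn (Pnew Pa Pc Pm c1 c2)" unfolding Pnew_def by (rule HD_diff)
  have main: "0 < markovM (n1,n2) x y z \<and>
      markovM (n1,n2) x y z * (x^n1 * y^n2 * z^(n1+n2)) = x*y*z * Phom nn (Pnew Pa Pc Pm c1 c2) (x^2) (y^2) (z^2)
      \<and> (markovM (c1,c2) x y z)^2 + (markovM (m1,m2) x y z)^2 + (markovM (n1,n2) x y z)^2
          = (x^2+y^2+z^2)/(x*y*z) * markovM (c1,c2) x y z * markovM (m1,m2) x y z * markovM (n1,n2) x y z"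
    if xyz: "0 < x" "0 < y" "0 < z" for x y z
  proof -
    define Ma Mc Mm Mn where "Ma = markovM (a1,a2) x y z" "Mc = markovM (c1,c2) x y z"
      "Mm = markovM (m1,m2) x y z" "Mn = markovM (n1,n2) x y z"
    define Xa Xc where "Xa = x^a1 * y^a2 * z^(a1+a2)" "Xc = x^c1 * y^c2 * z^(c1+c2)"
    define Ha Hc Hm where "Ha = Phom na Pa (x^2) (y^2) (z^2)" "Hc = Phom nc Pc (x^2) (y^2) (z^2)"
      "Hm = Phom nm Pm (x^2) (y^2) (z^2)"
    define K where "K = (x^2+y^2+z^2)/(x*y*z)"
    have pa: "0 < Ma" "Ma * Xa = x*y*z * Ha"
      using ga xyz by (auto simp: goodr_def Ma_Mc_Mm_Mn_def Xa_Xc_def Ha_Hc_Hm_def na_nc_nm_nn_def)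
    have pc: "0 < Mc" "Mc * Xc = x*y*z * Hc"
      using gc xyz by (auto simp: goodr_def Ma_Mc_Mm_Mn_def Xa_Xc_def Ha_Hc_Hm_def na_nc_nm_nn_def)
    have XX: "x^m1 * y^m2 * z^(m1+m2) = Xa * Xc" by (simp add: m Xa_Xc_def power_add algebra_simps)
    have gmx: "0 < Mm" "Mm * (x^m1 * y^m2 * z^(m1+m2)) = x*y*z * Hm"
      using gm xyz unfolding goodr_def Ma_Mc_Mm_Mn_def Ha_Hc_Hm_def na_nc_nm_nn_def by blast+
    then have pm: "0 < Mm" "Mm * (Xa * Xc) = x*y*z * Hm" by (simp_all only: XX)
    have me: "Ma^2 + Mc^2 + Mm^2 = K * Ma * Mc * Mm"
      using mq xyz by (simp add: meq_def Ma_Mc_Mm_Mn_def K_def)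
    have Mn: "Mn = (Mc^2 + Mm^2) / Ma" using rc by (simp add: Ma_Mc_Mm_Mn_def)
    note mu = mutation[OF me _ Mn]
    have pos: "0 < Mn" using Mn pa pc pm by (simp add: add_pos_pos)
    have Mn2: "Mn = K / (x*y*z) * (x*y*z) * Mc * Mm - Ma" using mu(1) pa xyz by simp
    have Kxyz: "K * (x*y*z) = x^2 + y^2 + z^2" using xyz by (simp add: K_def)
    have "Mn = (K * (x*y*z)) / (x*y*z) * Mc * Mm - Ma" using mu(1) pa xyz by simp
    then have Mn3: "Mn = (x^2+y^2+z^2) / (x*y*z) * Mc * Mm - Ma" by (simp only: Kxyz)
    have r: "Mn * (Xa * Xc^2) = x*y*z * ((x^2+y^2+z^2) * Hc * Hm - Xc^2 * Ha)"
      by (rule rep_alg[OF _ pc(2) pm(2) pa(2) Mn3]) (use xyz in simp)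
    have X: "x^n1 * y^n2 * z^(n1+n2) = Xa * Xc^2"
      by (simp add: n Xa_Xc_def power_add power_mult_distrib power2_eq_square algebra_simps power_mult)
    have Xc2: "Xc^2 = (x^2)^c1 * (y^2)^c2 * (z^2)^(c1+c2)"
      by (simp add: Xa_Xc_def power_mult_distrib power_mult[symmetric] mult.commute)
    have "Phom nn (Pnew Pa Pc Pm c1 c2) (x^2) (y^2) (z^2) = (x^2+y^2+z^2) * Hc * Hm - Xc^2 * Ha"
    proof -
      have "Phom nn (TP * Pc * Pm) (x^2) (y^2) (z^2) = (x^2+y^2+z^2) * Hc * Hm"
      proof -
        have T: "Phom 1 TP (x^2) (y^2) (z^2) = x^2+y^2+z^2" using Phom_T[of "y^2"] xyz by simp
        show ?thesis unfolding nn1 Phom_mult T by (simp add: Ha_Hc_Hm_def)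
      qed
      moreover have "Phom nn (Mono c1 (c1+c2) * Pa) (x^2) (y^2) (z^2) = Xc^2 * Ha"
        using Phom_Mono_mult[of "y^2" nn c1 c2 na Pa "x^2" "z^2"] xyz nn2 Xc2 by (simp add: Ha_Hc_Hm_def)
      ultimately show ?thesis unfolding Pnew_def Phom_diff by simp
    qed
    then have "Mn * (x^n1 * y^n2 * z^(n1+n2)) = x*y*z * Phom nn (Pnew Pa Pc Pm c1 c2) (x^2) (y^2) (z^2)"
      using r X by simp
    moreover have "Mc^2 + Mm^2 + Mn^2 = (x^2+y^2+z^2)/(x*y*z) * Mc * Mm * Mn"
      using mu(2) pa(1) by (simp add: K_def)
    ultimately show ?thesis using pos unfolding Ma_Mc_Mm_Mn_def by (intro conjI)
  qed
  have nnd: "n1 + n2 - 1 = nn" by (simp add: na_nc_nm_nn_def)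
  show "goodr n1 n2 (Pnew Pa Pc Pm c1 c2)" unfolding goodr_def nnd
  proof (rule conjI[OF HDn], intro allI impI)
    fix x y z :: real assume "0 < x" "0 < y" "0 < z"
    from main[OF this] show "0 < markovM (n1, n2) x y z \<and>
       markovM (n1, n2) x y z * (x ^ n1 * y ^ n2 * z ^ (n1 + n2)) =
       x * y * z * Phom nn (Pnew Pa Pc Pm c1 c2) (x\<^sup>2) (y\<^sup>2) (z\<^sup>2)" by (elim conjE) (intro conjI)
  qed
  show "meq (markovM (c1,c2)) (markovM (m1,m2)) (markovM (n1,n2))" unfolding meq_def
  proof (intro allI impI)
    fix x y z :: real assume "0 < x" "0 < y" "0 < z"
    from main[OF this] show "(markovM (c1,c2) x y z)^2 + (markovM (m1,m2) x y z)^2 + (markovM (n1,n2) x y z)^2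
          = (x^2+y^2+z^2)/(x*y*z) * markovM (c1,c2) x y z * markovM (m1,m2) x y z * markovM (n1,n2) x y z"
      by (elim conjE)
  qed
qed



definition good :: "nat \<Rightarrow> nat \<Rightarrow> real poly poly \<Rightarrow> bool" where
  "good p q P \<longleftrightarrow> goodr p q P \<and> lay p q P"

definition INV :: "nat \<Rightarrow> nat \<Rightarrow> nat \<Rightarrow> nat \<Rightarrow> bool" where
  "INV l1 l2 r1 r2 \<longleftrightarrow> (\<exists>PL PR PS. good l1 l2 PL \<and> good r1 r2 PR \<and> good (l1+r1) (l2+r2) PS \<and>
      meq (markovM (l1,l2)) (markovM (r1,r2)) (markovM (l1+r1,l2+r2)))"

lemma M01: "markovM (0,1) x y z = x"
  using markovM_family unfolding markov_family_def by simp
lemma M10: "markovM (1,0) x y z = y"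
  using markovM_family unfolding markov_family_def by simp
lemma M11: "markovM (1,1) x y z = (x^2+y^2)/z"
  using markovM_family unfolding markov_family_def by simp

lemma M_suc: "markovM (0,Suc 0) x y z = x" "markovM (Suc 0,0) x y z = y" "markovM (Suc 0,Suc 0) x y z = (x^2+y^2)/z"
  using M01 M10 M11 by simp_all

lemma goodr_01: "goodr 0 1 1"
  unfolding goodr_def by (simp add: M01 M_suc HD_one Phom_one)
lemma goodr_10: "goodr 1 0 1"
  unfolding goodr_def by (simp add: M10 M_suc HD_one Phom_one)
lemma goodr_11: "goodr 1 1 P11"
  unfolding goodr_def
proof (intro conjI allI impI)
  show "HD (1+1-1) P11" using HD_11 by simp
  fix x y z :: real assume xyz: "0 < x" "0 < y" "0 < z"
  show "0 < markovM (1,1) x y z" using xyz by (simp add: M11 M_suc add_pos_pos)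
  have "Phom (1+1-1) P11 (x^2) (y^2) (z^2) = x^2 + y^2"
    using xyz by (simp add: Phom_def eval2_def P11_def sP_def field_simps)
  then show "markovM (1,1) x y z * (x^1 * y^1 * z^(1+1)) = x*y*z * Phom (1+1-1) P11 (x^2) (y^2) (z^2)"
    using xyz by (simp add: M11 M_suc field_simps power2_eq_square)
qed

lemma meq_base: "meq (markovM (1,0)) (markovM (0,1)) (markovM (1,1))"
  unfolding meq_def M01 M10 M11
  by (auto simp: field_simps power2_eq_square)

lemma fd01: "frac_dom (0,1)" and fd10: "frac_dom (1,0)" and fd11: "frac_dom (1,1)"
  by (auto simp: frac_dom_def)

lemma INV_base: "INV 0 1 1 1"
proof -
  have rc: "markovM (1+2*0, 0+2*1) x y z = ((markovM (0,1) x y z)^2 + (markovM (1+0,0+1) x y z)^2) / markovM (1,0) x y z" for x y z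
    by (rule rec_M) (auto simp: frac_dom_def)
  have g12: "goodr (1+2*0) (0+2*1) (Pnew 1 1 P11 0 1)"
    by (rule step_rep(1)[OF goodr_10 goodr_01 goodr_11]) (use meq_base rc in simp_all)
  have mq: "meq (markovM (0,1)) (markovM (1,1)) (markovM (1+2*0,0+2*1))"
    by (rule step_rep(2)[OF goodr_10 goodr_01 goodr_11]) (use meq_base rc in simp_all)
  have g12': "goodr 1 2 (Pnew 1 1 P11 0 1)" using g12 by (simp add: numeral_2_eq_2)
  have mq': "meq (markovM (0,1)) (markovM (1,1)) (markovM (0+1,1+1))" using mq by simp
  have "good 1 2 (Pnew 1 1 P11 0 1)" unfolding good_def by (intro conjI g12' lay_12)
  then have "good (0+1) (1+1) (Pnew 1 1 P11 0 1)" by (simp add: numeral_2_eq_2)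
  moreover have "good 0 1 1" "good 1 1 P11"
    unfolding good_def by (intro conjI goodr_01 goodr_11 lay_01 lay_11)+
  ultimately show ?thesis unfolding INV_def using mq' by (intro exI[of _ 1] exI[of _ P11] exI[of _ "Pnew 1 1 P11 0 1"]) simp
qed

lemma goodD: "good p q P \<Longrightarrow> goodr p q P" "good p q P \<Longrightarrow> lay p q P" "good p q P \<Longrightarrow> HD (p+q-1) P"
  by (auto simp: good_def goodr_def)

lemma INV_A:
  assumes nb: "r1*l2 = l1*r2 + 1" "r1 \<le> r2"
    and h: "l1 \<le> r1" "l2 \<le> r2" "r1 - l1 \<le> r2 - l2" "(r1-l1)*l2 = l1*(r2-l2) + 1"
    and IH: "INV l1 l2 (r1-l1) (r2-l2)"
  shows "INV l1 l2 r1 r2"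
proof -
  define a1 a2 where "a1 = r1 - l1" "a2 = r2 - l2"
  have r: "r1 = a1 + l1" "r2 = a2 + l2" using h by (auto simp: a1_a2_def)
  obtain PL Pa PR where gL: "good l1 l2 PL" and ga: "good a1 a2 Pa" and gR: "good r1 r2 PR"
    and mq0: "meq (markovM (l1,l2)) (markovM (a1,a2)) (markovM (r1,r2))"
    using IH unfolding INV_def a1_a2_def[symmetric] by (auto simp: r add.commute)
  have fd: "frac_dom (l1,l2)" "frac_dom (a1,a2)" "l1 < l2" "1 \<le> a1" "1 \<le> l2"
    using nb_facts[OF h(4) h(3)] by (auto simp: a1_a2_def)
  have i: "int a1 * int l2 = int l1 * int a2 + 1" using h(4) unfolding a1_a2_def[symmetric]
    by (metis of_nat_add of_nat_mult of_nat_1)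
  have rc: "markovM (a1 + 2*l1, a2 + 2*l2) x y z = ((markovM (l1,l2) x y z)^2 + (markovM (a1+l1,a2+l2) x y z)^2) / markovM (a1,a2) x y z" for x y z
    by (rule rec_M) (use fd i h(3) in \<open>auto simp: algebra_simps a1_a2_def\<close>)
  have rc': "markovM (l1+r1, l2+r2) x y z = ((markovM (l1,l2) x y z)^2 + (markovM (r1,r2) x y z)^2) / markovM (a1,a2) x y z" for x y z
  proof -
    have e: "(l1+r1, l2+r2) = (a1 + 2*l1, a2 + 2*l2)" "(r1,r2) = (a1+l1, a2+l2)" by (simp_all add: r)
    show ?thesis unfolding e by (rule rc)
  qed
  have mq: "meq (markovM (a1,a2)) (markovM (l1,l2)) (markovM (r1,r2))" using mq0 by (rule meq_perm(1))
  have sa: "1 \<le> a1 + a2" "1 \<le> l1 + l2" using fd by auto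
  note st = step_rep[OF goodD(1)[OF ga] goodD(1)[OF gL] goodD(1)[OF gR] r _ _ sa mq rc']
  have g: "goodr (l1+r1) (l2+r2) (Pnew Pa PL PR l1 l2)" and m: "meq (markovM (l1,l2)) (markovM (r1,r2)) (markovM (l1+r1,l2+r2))"
    using st by (simp_all add: r)
  have ly: "lay (l1+r1) (l2+r2) (Pnew Pa PL PR l1 l2)"
  proof (cases "l1 = 0")
    case True
    then have l2: "l2 = 1" using fd(1) frac_dom_0 by auto
    have a1: "a1 = 1" using h(4) True l2 unfolding a1_a2_def[symmetric] by simp
    have k: "1 \<le> a2" using h(3) a1 unfolding a1_a2_def[symmetric] by simp
    have "lay 1 (a2+2) (Pnew Pa PL PR 0 1)"
      by (rule lay_chain01) (use goodD[OF gL] goodD[OF ga] goodD[OF gR] True l2 a1 r k in auto)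
    then show ?thesis using True l2 a1 r by (simp add: add.commute)
  next
    case False
    have "lay (r1+l1) (r2+l2) (Pnew Pa PL PR l1 l2)"
      by (rule lay_generic) (use goodD[OF gL] goodD[OF gR] False fd r in auto)
    then show ?thesis by (simp add: add.commute)
  qed
  have gS: "good (l1+r1) (l2+r2) (Pnew Pa PL PR l1 l2)" unfolding good_def using g ly by simp
  show ?thesis unfolding INV_def using gL gR gS m by blast
qed

lemma INV_B:
  assumes nb: "r1*l2 = l1*r2 + 1" "r1 \<le> r2"
    and h: "r1 \<le> l1" "r2 \<le> l2" "r1*(l2-r2) = (l1-r1)*r2 + 1"
    and IH: "INV (l1-r1) (l2-r2) r1 r2"
  shows "INV l1 l2 r1 r2"
proof -
  define b1 b2 where "b1 = l1 - r1" "b2 = l2 - r2"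
  have l: "l1 = b1 + r1" "l2 = b2 + r2" using h by (auto simp: b1_b2_def)
  obtain Pb PR PL where gb: "good b1 b2 Pb" and gR: "good r1 r2 PR" and gL: "good l1 l2 PL"
    and mq: "meq (markovM (b1,b2)) (markovM (r1,r2)) (markovM (l1,l2))"
    using IH unfolding INV_def b1_b2_def[symmetric] by (auto simp: l)
  have fd: "frac_dom (b1,b2)" "frac_dom (r1,r2)" "b1 < b2" "1 \<le> r1" "1 \<le> b2"
    using nb_facts[OF h(3) nb(2)] by (auto simp: b1_b2_def)
  have i: "int r1 * int b2 = int b1 * int r2 + 1" using h(3) unfolding b1_b2_def[symmetric]
    by (metis of_nat_add of_nat_mult of_nat_1)
  have rc: "markovM (b1 + 2*r1, b2 + 2*r2) x y z = ((markovM (r1,r2) x y z)^2 + (markovM (b1+r1,b2+r2) x y z)^2) / markovM (b1,b2) x y z" for x y z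
    by (rule rec_M) (use fd i nb(2) in \<open>auto simp: algebra_simps\<close>)
  have rc': "markovM (l1+r1, l2+r2) x y z = ((markovM (r1,r2) x y z)^2 + (markovM (l1,l2) x y z)^2) / markovM (b1,b2) x y z" for x y z
  proof -
    have e: "(l1+r1, l2+r2) = (b1 + 2*r1, b2 + 2*r2)" "(l1,l2) = (b1+r1, b2+r2)" by (simp_all add: l)
    show ?thesis unfolding e by (rule rc)
  qed
  have sa: "1 \<le> b1 + b2" "1 \<le> r1 + r2" using fd by auto
  note st = step_rep[OF goodD(1)[OF gb] goodD(1)[OF gR] goodD(1)[OF gL] l _ _ sa mq rc']
  have g: "goodr (l1+r1) (l2+r2) (Pnew Pb PR PL r1 r2)" and m0: "meq (markovM (r1,r2)) (markovM (l1,l2)) (markovM (l1+r1,l2+r2))"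
    using st by (simp_all add: l)
  have m: "meq (markovM (l1,l2)) (markovM (r1,r2)) (markovM (l1+r1,l2+r2))" using m0 by (rule meq_perm(1))
  have ly: "lay (l1+r1) (l2+r2) (Pnew Pb PR PL r1 r2)"
  proof (cases "r1 = 1 \<and> r2 = 1")
    case True
    then have b2: "b2 = b1 + 1" using h(3) unfolding b1_b2_def[symmetric] by simp
    have "lay (b1+2) (b1+3) (Pnew Pb PR PL 1 1)"
      by (rule lay_chain11) (use goodD[OF gR] goodD[OF gb] goodD[OF gL] True l b2 in \<open>auto simp: add.commute\<close>)
    then show ?thesis using True l b2 by (simp add: add.commute numeral_3_eq_3 numeral_2_eq_2)
  next
    case False
    have "r2 \<ge> 2" using False fd(4) nb(2) by auto
    then show ?thesis
      by (intro lay_generic) (use goodD[OF gL] goodD[OF gR] fd l in auto)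
  qed
  have gS: "good (l1+r1) (l2+r2) (Pnew Pb PR PL r1 r2)" unfolding good_def using g ly by simp
  show ?thesis unfolding INV_def using gL gR gS m by blast
qed

lemma INV_all: "r1*l2 = l1*r2 + 1 \<Longrightarrow> r1 \<le> r2 \<Longrightarrow> INV l1 l2 r1 r2"
proof (induction "l1+l2+r1+r2" arbitrary: l1 l2 r1 r2 rule: less_induct)
  case less
  have f: "1 \<le> r1" "1 \<le> l2" using nb_facts[OF less.prems] by auto
  from nb_cases[OF less.prems] show ?case
  proof (elim disjE conjE)
    assume "l1 = 0" "l2 = 1" "r1 = 1" "r2 = 1"
    then show ?thesis using INV_base by simp
  next
    assume h: "l1 \<le> r1" "l2 \<le> r2" "r1 - l1 \<le> r2 - l2" "(r1-l1)*l2 = l1*(r2-l2) + 1"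
    have "INV l1 l2 (r1-l1) (r2-l2)"
      by (rule less.hyps) (use h f in auto)
    then show ?thesis by (rule INV_A[OF less.prems h])
  next
    assume h: "r1 \<le> l1" "r2 \<le> l2" "r1*(l2-r2) = (l1-r1)*r2 + 1"
    have "INV (l1-r1) (l2-r2) r1 r2"
      by (rule less.hyps) (use h f less.prems in auto)
    then show ?thesis by (rule INV_B[OF less.prems h])
  qed
qed

lemma good_exists:
  assumes "coprime a b" "1 \<le> a" "a < (b::nat)"
  shows "\<exists>P. good a b P"
proof -
  obtain l1 l2 r1 r2 where nb: "l1 + r1 = a" "l2 + r2 = b" "r1*l2 = l1*r2 + 1" "r1 \<le> r2"
    using nb_exists[OF assms] by blast
  then show ?thesis using INV_all[OF nb(3,4)] unfolding INV_def by blast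
qed



lemma HD_coeffD: "HD n P \<Longrightarrow> n < i + k \<Longrightarrow> coeff (coeff P k) i = 0"
  unfolding HD_def by (meson not_le)

lemma HD_degs: assumes "HD n P" shows "degree P \<le> n" "degree (coeff P k) \<le> n"
proof -
  have "coeff P k = 0" if "k > n" for k
    using that HD_coeffD[OF assms] by (intro poly_eqI) simp
  then show "degree P \<le> n" by (intro degree_le) auto
  have "coeff (coeff P k) i = 0" if "i > n" for i
    using that HD_coeffD[OF assms] by simp
  then show "degree (coeff P k) \<le> n" by (intro degree_le) auto
qed

lemma poly_sum_le:
  fixes x :: "'a::{comm_semiring_0,semiring_1}"
  assumes "degree p \<le> m"
  shows "poly p x = (\<Sum>i\<le>m. coeff p i * x^i)"
proof -
  have "poly p x = (\<Sum>i\<le>degree p. coeff p i * x^i)" by (simp add: poly_altdef)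
  also have "\<dots> = (\<Sum>i\<le>m. coeff p i * x^i)"
    by (rule sum.mono_neutral_left) (use assms in \<open>auto simp: coeff_eq_0\<close>)
  finally show ?thesis .
qed

lemma eval2_expand:
  assumes "HD n P"
  shows "eval2 P c d = (\<Sum>k\<le>n. \<Sum>i\<le>n. coeff (coeff P k) i * c^i * d^k)"
proof -
  have "poly P [:d:] = (\<Sum>k\<le>n. coeff P k * [:d:]^k)"
    by (rule poly_sum_le) (rule HD_degs(1)[OF assms])
  then have "eval2 P c d = (\<Sum>k\<le>n. poly (coeff P k) c * d^k)"
    by (simp add: eval2_def poly_sum poly_power)
  also have "\<dots> = (\<Sum>k\<le>n. (\<Sum>i\<le>n. coeff (coeff P k) i * c^i) * d^k)"
    by (intro sum.cong refl) (simp add: poly_sum_le[OF HD_degs(2)[OF assms]])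
  also have "\<dots> = (\<Sum>k\<le>n. \<Sum>i\<le>n. coeff (coeff P k) i * c^i * d^k)"
    by (simp add: sum_distrib_right)
  finally show ?thesis .
qed

lemma rev_sum: "(\<Sum>j\<le>m. f (m - j)) = (\<Sum>j\<le>(m::nat). (f j :: real))"
  by (rule sum.reindex_bij_witness[of _ "\<lambda>j. m - j" "\<lambda>j. m - j"]) auto

lemma Phom_expand:
  assumes "HD n P" "v \<noteq> 0"
  shows "Phom n P u v w = (\<Sum>i\<le>n. \<Sum>j\<le>n-i. coeff (coeff P (n-i-j)) i * u^i * v^j * w^(n-i-j))"
proof -
  define T where "T k i = coeff (coeff P k) i * u^i * v^(n-i-k) * w^k" for k i
  have "Phom n P u v w = (\<Sum>k\<le>n. \<Sum>i\<le>n. v^n * (coeff (coeff P k) i * (u/v)^i * (w/v)^k))"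
    by (simp add: Phom_def eval2_expand[OF assms(1)] sum_distrib_left)
  also have "\<dots> = (\<Sum>k\<le>n. \<Sum>i\<le>n. T k i)"
  proof (intro sum.cong refl)
    fix k i assume "k \<in> {..n}" "i \<in> {..n}"
    show "v^n * (coeff (coeff P k) i * (u/v)^i * (w/v)^k) = T k i"
    proof (cases "i + k \<le> n")
      case True
      then have "v^n = v^(n-i-k) * v^i * v^k" by (simp add: power_add[symmetric])
      then show ?thesis using assms(2) by (simp add: T_def power_divide field_simps)
    next
      case False
      then show ?thesis using HD_coeffD[OF assms(1)] by (simp add: T_def)
    qed
  qed
  also have "\<dots> = (\<Sum>i\<le>n. \<Sum>k\<le>n. T k i)" by (rule sum.swap)
  also have "\<dots> = (\<Sum>i\<le>n. \<Sum>k\<le>n-i. T k i)"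
  proof (rule sum.cong[OF refl])
    fix i assume "i \<in> {..n}"
    show "(\<Sum>k\<le>n. T k i) = (\<Sum>k\<le>n-i. T k i)"
      by (rule sum.mono_neutral_right) (auto simp: T_def HD_coeffD[OF assms(1)])
  qed
  also have "\<dots> = (\<Sum>i\<le>n. \<Sum>j\<le>n-i. coeff (coeff P (n-i-j)) i * u^i * v^j * w^(n-i-j))"
  proof (rule sum.cong[OF refl])
    fix i assume i: "i \<in> {..n}"
    have "(\<Sum>j\<le>n-i. coeff (coeff P (n-i-j)) i * u^i * v^j * w^(n-i-j))
        = (\<Sum>j\<le>n-i. (\<lambda>k. coeff (coeff P k) i * u^i * v^(n-i-k) * w^k) (n - i - j))"
      by (intro sum.cong refl) (use i in \<open>auto simp: diff_diff_left\<close>)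
    also have "\<dots> = (\<Sum>k\<le>n-i. (\<lambda>k. coeff (coeff P k) i * u^i * v^(n-i-k) * w^k) k)"
      by (rule rev_sum[of "\<lambda>k. coeff (coeff P k) i * u^i * v^(n-i-k) * w^k" "n-i"])
    also have "\<dots> = (\<Sum>k\<le>n-i. T k i)" by (simp add: T_def)
    finally show "(\<Sum>k\<le>n-i. T k i) = (\<Sum>j\<le>n-i. coeff (coeff P (n-i-j)) i * u^i * v^j * w^(n-i-j))" ..
  qed
  finally show ?thesis .
qed

lemma polyfun_pos_zero:
  fixes c :: "nat \<Rightarrow> real"
  assumes "\<And>x. 0 < x \<Longrightarrow> (\<Sum>i\<le>n. c i * x^i) = 0" "i \<le> n"
  shows "c i = 0"
proof (rule ccontr)
  assume "c i \<noteq> 0"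
  then have "finite {x. (\<Sum>i\<le>n. c i * x^i) = 0}" using polyfun_finite_roots assms(2) by blast
  moreover have "{0<..} \<subseteq> {x. (\<Sum>i\<le>n. c i * x^i) = 0}" using assms(1) by auto
  ultimately have "finite {0::real<..}" by (rule finite_subset[rotated])
  then show False using infinite_Ioi by blast
qed

lemma coeffs_unique:
  fixes A B :: "nat \<Rightarrow> nat \<Rightarrow> real"
  assumes "\<And>u w. 0 < u \<Longrightarrow> 0 < w \<Longrightarrow> (\<Sum>i\<le>n. \<Sum>j\<le>n-i. A i j * u^i * 1^j * w^(n-i-j)) = (\<Sum>i\<le>n. \<Sum>j\<le>n-i. B i j * u^i * 1^j * w^(n-i-j))"
    and ij: "i + j \<le> n"
  shows "A i j = B i j"
proof -
  define D where "D i j = A i j - B i j" for i j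
  have z: "(\<Sum>i\<le>n. (\<Sum>j\<le>n-i. D i j * w^(n-i-j)) * u^i) = 0" if "0 < u" "0 < w" for u w
    using assms(1)[OF that]
    by (simp add: D_def algebra_simps sum_subtractf sum_distrib_right sum_distrib_left)
  have "(\<Sum>j\<le>n-i. D i j * w^(n-i-j)) = 0" if "0 < w" for w
    using polyfun_pos_zero[of "\<lambda>i. \<Sum>j\<le>n-i. D i j * w^(n-i-j)" n i] z[OF _ that] ij
    by (simp add: mult.commute)
  moreover have "(\<Sum>j\<le>n-i. D i j * w^(n-i-j)) = (\<Sum>k\<le>n-i. D i (n-i-k) * w^k)" for w
  proof -
    have "(\<Sum>j\<le>n-i. D i j * w^(n-i-j)) = (\<Sum>j\<le>n-i. (\<lambda>k. D i (n-i-k) * w^k) (n-i-j))"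
      by (intro sum.cong refl) (use ij in auto)
    also have "\<dots> = (\<Sum>k\<le>n-i. D i (n-i-k) * w^k)" by (rule rev_sum[of "\<lambda>k. D i (n-i-k) * w^k" "n-i"])
    finally show ?thesis .
  qed
  ultimately have "(\<Sum>k\<le>n-i. D i (n-i-k) * w^k) = 0" if "0 < w" for w
    using that by metis
  then have "D i (n-i-(n-i-j)) = 0"
    using polyfun_pos_zero[of "\<lambda>k. D i (n-i-k)" "n-i" "n-i-j"] ij by simp
  then show ?thesis using ij by (simp add: D_def)
qed



definition cf :: "real poly \<Rightarrow> int \<Rightarrow> real" where
  "cf p i = (if 0 \<le> i then coeff p (nat i) else 0)"

definition LCp :: "real poly \<Rightarrow> bool" where
  "LCp p \<longleftrightarrow> (\<forall>i. 0 \<le> cf p i) \<and> (\<forall>i. cf p (i-1) * cf p (i+1) \<le> (cf p i)^2) \<and>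
     (\<forall>i j k. i < j \<longrightarrow> j < k \<longrightarrow> 0 < cf p i \<longrightarrow> 0 < cf p k \<longrightarrow> 0 < cf p j)"

lemma cf_mult_lin: "cf (p * [:s, r:]) i = s * cf p i + r * cf p (i-1)"
proof -
  have e: "p * [:s, r:] = smult s p + pCons 0 (smult r p)"
    by (simp add: mult_pCons_right)
  show ?thesis
  proof (cases "0 \<le> i")
    case True
    show ?thesis
    proof (cases "i = 0")
      case True then show ?thesis by (simp add: cf_def e)
    next
      case False
      then have "nat i = Suc (nat (i-1))" using \<open>0 \<le> i\<close> by linarith
      then show ?thesis using \<open>0 \<le> i\<close> False by (simp add: cf_def e)
    qed
  next
    case False then show ?thesis unfolding cf_def by simp
  qed
qed

lemma LC_one: "LCp 1"
  unfolding LCp_def cf_def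
  by (auto simp: coeff_1 nat_eq_iff split: if_splits)

lemma LC_mult_lin:
  assumes "LCp p" "0 \<le> s" "0 \<le> r"
  shows "LCp (p * [:s, r:])"
proof -
  define f where "f = cf p"
  define g where "g = cf (p * [:s, r:])"
  have g: "g i = s * f i + r * f (i-1)" for i unfolding g_def f_def by (rule cf_mult_lin)
  have f0: "0 \<le> f i" for i using assms(1) by (simp add: LCp_def f_def)
  have fl: "f (i-1) * f (i+1) \<le> (f i)^2" for i using assms(1) by (simp add: LCp_def f_def)
  have fn: "i < j \<Longrightarrow> j < k \<Longrightarrow> 0 < f i \<Longrightarrow> 0 < f k \<Longrightarrow> 0 < f j" for i j k
    using assms(1) unfolding LCp_def f_def by blast
  have g0: "0 \<le> g i" for i using f0 assms(2,3) by (simp add: g)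
  have cross: "f (i-2) * f (i+1) \<le> f i * f (i-1)" for i
  proof (cases "0 < f (i-2) \<and> 0 < f (i+1)")
    case False
    then have "f (i-2) * f (i+1) = 0" using f0[of "i-2"] f0[of "i+1"] by auto
    moreover have "0 \<le> f i * f (i-1)" using f0[of i] f0[of "i-1"] by simp
    ultimately show ?thesis by auto
  next
    case True
    have p1: "0 < f (i-1)" by (rule fn[of "i-2" "i-1" "i+1"]) (use True in auto)
    have p2: "0 < f i" by (rule fn[of "i-2" i "i+1"]) (use True in auto)
    have h1: "f (i-2) * f i \<le> (f (i-1))^2" using fl[of "i-1"] by (simp add: algebra_simps)
    have h2: "f (i-1) * f (i+1) \<le> (f i)^2" using fl[of i] by simp
    have "(f (i-2) * f i) * (f (i-1) * f (i+1)) \<le> (f (i-1))^2 * (f i)^2"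
      by (rule mult_mono[OF h1 h2]) (use f0 in \<open>auto\<close>)
    then have "(f (i-1) * f i) * (f (i-2) * f (i+1)) \<le> (f (i-1) * f i) * (f i * f (i-1))"
      by (simp add: algebra_simps power2_eq_square)
    then show ?thesis using p1 p2 by (simp add: mult_le_cancel_left_pos)
  qed
  have gl: "g (i-1) * g (i+1) \<le> (g i)^2" for i
  proof -
    have "(g i)^2 - g (i-1) * g (i+1) = s^2 * ((f i)^2 - f (i-1) * f (i+1)) + r^2 * ((f (i-1))^2 - f (i-2) * f i)
          + r * s * (f i * f (i-1) - f (i-2) * f (i+1))"
      by (simp add: g algebra_simps power2_eq_square)
    moreover have "0 \<le> s^2 * ((f i)^2 - f (i-1) * f (i+1))" using fl[of i] by simp
    moreover have "0 \<le> r^2 * ((f (i-1))^2 - f (i-2) * f i)"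
    proof -
      have "f (i-2) * f i \<le> (f (i-1))^2" using fl[of "i-1"] by (simp add: algebra_simps)
      then show ?thesis by (intro mult_nonneg_nonneg) auto
    qed
    moreover have "0 \<le> r * s * (f i * f (i-1) - f (i-2) * f (i+1))"
      using cross[of i] assms(2,3) by simp
    ultimately show ?thesis by linarith
  qed
  have gpos: "0 < g t \<Longrightarrow> (0 < s \<and> 0 < f t) \<or> (0 < r \<and> 0 < f (t-1))" for t
  proof -
    assume gt: "0 < g t"
    have a: "0 < s \<and> 0 < f t \<or> s * f t = 0" using f0[of t] assms(2) by (auto simp: less_le)
    have b: "0 < r \<and> 0 < f (t-1) \<or> r * f (t-1) = 0" using f0[of "t-1"] assms(3) by (auto simp: less_le)
    show ?thesis using a b gt by (auto simp: g)
  qed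
  have gn: "0 < g j" if ij: "i < j" "j < k" and gi: "0 < g i" and gk: "0 < g k" for i j k
  proof -
    have "0 < s \<and> 0 < f j \<or> 0 < r \<and> 0 < f (j-1)"
    proof -
      from gpos[OF gi] gpos[OF gk] show ?thesis
      proof (elim disjE conjE)
        assume "0 < s" "0 < f i" "0 < f k" then show ?thesis using fn[of i j k] ij by auto
      next
        assume "0 < r" "0 < f (i-1)" "0 < f (k-1)" then show ?thesis using fn[of "i-1" "j-1" "k-1"] ij by auto
      next
        assume a: "0 < s" "0 < f i" "0 < r" "0 < f (k-1)"
        show ?thesis
        proof (cases "j = k - 1")
          case True then show ?thesis using a by auto
        next
          case False then show ?thesis using fn[of i j "k-1"] ij a by auto
        qed
      next
        assume a: "0 < r" "0 < f (i-1)" "0 < s" "0 < f k"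
        show ?thesis
        proof (cases "j - 1 = i - 1")
          case True then show ?thesis using ij by auto
        next
          case False then show ?thesis using fn[of "i-1" j k] ij a by auto
        qed
      qed
    qed
    then show ?thesis using f0[of j] f0[of "j-1"] assms(2,3)
      by (auto simp: g intro: add_pos_nonneg add_nonneg_pos)
  qed
  show ?thesis unfolding LCp_def g_def[symmetric] using g0 gl gn by blast
qed

lemma LC_smult: "LCp p \<Longrightarrow> 0 < c \<Longrightarrow> LCp (smult c p)"
  unfolding LCp_def cf_def
  by (auto simp: power_mult_distrib mult_le_cancel_left_pos zero_less_mult_iff algebra_simps
       power2_eq_square split: if_splits)



lemma Pcoeff_eq:
  assumes a1: "1 \<le> a" and b1: "1 \<le> b" and g: "good a b P"
  shows "Pcoeff a b = (\<lambda>i j. if i + j \<le> a+b-1 then coeff (coeff P (a+b-1-i-j)) i else 0)"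
proof -
  define n where "n = a+b-1"
  define A where "A = (\<lambda>i j. if i + j \<le> a+b-1 then coeff (coeff P (a+b-1-i-j)) i else 0)"
  have HDP: "HD n P" using goodD(3)[OF g] by (simp add: n_def)
  have rep: "markovM (a,b) x y z * (x^a * y^b * z^(a+b)) = x*y*z * Phom n P (x^2) (y^2) (z^2)"
    if "0 < x" "0 < y" "0 < z" for x y z
    using goodD(1)[OF g] that unfolding goodr_def n_def by blast
  have sumA: "Phom n P u v w = (\<Sum>i\<le>n. \<Sum>j\<le>n-i. A i j * u^i * v^j * w^(n-i-j))" if "v \<noteq> 0" for u v w
    unfolding Phom_expand[OF HDP that]
    by (intro sum.cong refl) (auto simp: A_def n_def diff_diff_left)
  define S where "S A' x y z = (\<Sum>i\<le>a+b-1. \<Sum>j\<le>a+b-1-i. A' i j * (x^2)^i * (y^2)^j * (z^2)^(a+b-1-i-j))"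
    for A' :: "nat \<Rightarrow> nat \<Rightarrow> real" and x y z :: real
  have MA: "markovM (a,b) x y z = S A x y z / (x^(a-1) * y^(b-1) * z^(a+b-1))"
    if xyz: "0 < x" "0 < y" "0 < z" for x y z
  proof -
    have "x^a * y^b * z^(a+b) = (x*y*z) * (x^(a-1) * y^(b-1) * z^(a+b-1))"
    proof -
      have "x^a = x * x^(a-1)" "y^b = y * y^(b-1)" "z^(a+b) = z * z^(a+b-1)"
        using a1 b1 by (simp_all add: power_eq_if)
      then show ?thesis by (simp add: algebra_simps)
    qed
    moreover have "Phom n P (x^2) (y^2) (z^2) = S A x y z"
      using sumA[of "y^2" "x^2" "z^2"] xyz by (simp add: S_def n_def)
    ultimately have "markovM (a,b) x y z * ((x*y*z) * (x^(a-1) * y^(b-1) * z^(a+b-1))) = (x*y*z) * S A x y z"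
      using rep[OF xyz] by simp
    then show ?thesis using xyz by (simp add: field_simps)
  qed
  have condA: "(\<forall>i j. a + b - 1 < i + j \<longrightarrow> A i j = 0) \<and>
     (\<forall>x y z :: real. x > 0 \<longrightarrow> y > 0 \<longrightarrow> z > 0 \<longrightarrow>
        markovM (a,b) x y z =
          (\<Sum>i\<le>a+b-1. \<Sum>j\<le>a+b-1-i. A i j * (x^2)^i * (y^2)^j * (z^2)^(a+b-1-i-j))
          / (x^(a-1) * y^(b-1) * z^(a+b-1)))"
    using MA by (auto simp: A_def S_def)
  have uniq: "A' = A" if c: "(\<forall>i j. a + b - 1 < i + j \<longrightarrow> A' i j = 0) \<and>
     (\<forall>x y z :: real. x > 0 \<longrightarrow> y > 0 \<longrightarrow> z > 0 \<longrightarrow>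
        markovM (a,b) x y z =
          (\<Sum>i\<le>a+b-1. \<Sum>j\<le>a+b-1-i. A' i j * (x^2)^i * (y^2)^j * (z^2)^(a+b-1-i-j))
          / (x^(a-1) * y^(b-1) * z^(a+b-1)))" for A'
  proof (intro ext)
    fix i j
    have MA': "markovM (a,b) x y z = S A' x y z / (x^(a-1) * y^(b-1) * z^(a+b-1))"
      if "0 < x" "0 < y" "0 < z" for x y z using c that by (simp add: S_def)
    have eq: "(\<Sum>i\<le>n. \<Sum>j\<le>n-i. A' i j * u^i * 1^j * w^(n-i-j)) = (\<Sum>i\<le>n. \<Sum>j\<le>n-i. A i j * u^i * 1^j * w^(n-i-j))"
      if uw: "0 < u" "0 < w" for u w
    proof -
      define x z where "x = sqrt u" "z = sqrt w"
      have xz: "0 < x" "0 < z" "x^2 = u" "z^2 = w" using uw by (auto simp: x_z_def)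
      have "S A' x 1 z / (x^(a-1) * 1^(b-1) * z^(a+b-1)) = S A x 1 z / (x^(a-1) * 1^(b-1) * z^(a+b-1))"
        using MA'[of x 1 z] MA[of x 1 z] xz by simp
      then have "S A' x 1 z = S A x 1 z" using xz by (simp add: field_simps)
      then show ?thesis by (simp add: S_def xz n_def)
    qed
    show "A' i j = A i j"
    proof (cases "i + j \<le> n")
      case True
      show ?thesis by (rule coeffs_unique[OF eq True]) auto
    next
      case False
      then show ?thesis using c by (auto simp: A_def n_def)
    qed
  qed
  show ?thesis unfolding Pcoeff_def A_def[symmetric]
    by (rule the_equality) (use condA uniq in blast)+
qed

lemma disc_nonneg:
  fixes a b :: nat
  assumes "1 \<le> a" "5 * a \<le> 3 * b"
  shows "(real a - 1) * (real a - 2) * (real b - 1) * (real b - 2) \<le> (real a * real b - 4 * real a + 2)^2"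
proof -
  define t where "t = 3 * real b - 5 * real a"
  have t0: "0 \<le> t" using assms(2) unfolding t_def by linarith
  have rb: "real b = (t + 5 * real a) / 3" by (simp add: t_def)
  have key: "9 * ((real a * real b - 4 * real a + 2)^2 - (real a - 1) * (real a - 2) * (real b - 1) * (real b - 2))
      = 15 * (real a)^2 * t + 3 * real a * t^2 + (real a)^2 - 35 * real a * t - 2 * t^2 + 18 * t"
    unfolding rb by (simp add: field_simps power2_eq_square)
  have E: "0 \<le> 15 * (real a)^2 * t + 3 * real a * t^2 + (real a)^2 - 35 * real a * t - 2 * t^2 + 18 * t"
  proof (cases "a = 1")
    case True
    then have "15 * (real a)^2 * t + 3 * real a * t^2 + (real a)^2 - 35 * real a * t - 2 * t^2 + 18 * t = (t - 1)^2"
      by (simp add: power2_eq_square algebra_simps)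
    then show ?thesis by simp
  next
    case False
    show ?thesis
    proof (cases "a = 2")
      case True
      then have "15 * (real a)^2 * t + 3 * real a * t^2 + (real a)^2 - 35 * real a * t - 2 * t^2 + 18 * t = 4 * (t + 1)^2"
        by (simp add: power2_eq_square algebra_simps)
      then show ?thesis by simp
    next
      case False
      then have a3: "3 \<le> real a" using \<open>a \<noteq> 1\<close> assms(1) by linarith
      have "0 \<le> 5 * real a * t * (3 * real a - 7)" using a3 t0 by (intro mult_nonneg_nonneg) auto
      moreover have "0 \<le> t^2 * (3 * real a - 2)" using a3 by (intro mult_nonneg_nonneg) auto
      moreover have "0 \<le> (real a)^2 + 18 * t" using t0 by simp
      ultimately show ?thesis by (simp add: algebra_simps power2_eq_square)
    qed
  qed
  have "0 \<le> 9 * ((real a * real b - 4 * real a + 2)^2 - (real a - 1) * (real a - 2) * (real b - 1) * (real b - 2))"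
    unfolding key by (rule E)
  then show ?thesis by simp
qed

lemma LC_sP_pow: "LCp (sP^m)"
proof (induction m)
  case 0 then show ?case by (simp add: LC_one)
next
  case (Suc m)
  have e: "sP^Suc m = sP^m * [:1,1:]" unfolding power_Suc2 sP_def ..
  have "LCp (sP^m * [:1,1:])" by (rule LC_mult_lin[OF Suc]) simp_all
  then show ?case unfolding e .
qed

lemma LC_zero: "LCp 0"
  unfolding LCp_def cf_def by simp

lemma LC_layer2:
  assumes "1 \<le> a" "5 * a \<le> 3 * b" "2 \<le> b" "sP^4 * Q = sP^(a+b-1) * Qp a b"
  shows "LCp Q"
proof -
  have s4: "sP^4 \<noteq> 0" using sP_nz by simp
  consider "b = 2" | "b = 3" | "4 \<le> b" using assms(3) by linarith
  then show ?thesis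
  proof cases
    case 1
    then have "a = 1" using assms by linarith
    then have "Qp a b = 0" using 1 by (simp add: Qp_def)
    then have "Q = 0" using assms(4) s4 by simp
    then show ?thesis using LC_zero by simp
  next
    case 2
    then have a: "a = 1" using assms by linarith
    have "Qp a b = sP * [:0,1:]" using 2 a by (simp add: Qp_def sP_def)
    moreover have "sP^4 = sP^3 * sP" by (simp add: eval_nat_numeral)
    ultimately have "sP^4 * Q = sP^4 * [:0,1:]" using assms(4) 2 a by (simp add: mult.assoc)
    then have "Q = [:0, 1:]" using s4 mult_left_cancel by blast
    then show ?thesis using LC_mult_lin[OF LC_one, of 0 1] by simp
  next
    case 3
    define al be ga where "al = (real b - 1) * (real b - 2) / 2"
      "be = real a * real b - 4 * real a + 2" "ga = (real a - 1) * (real a - 2) / 2"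
    have Q: "Qp a b = [:ga, be, al:]" by (simp add: Qp_def al_be_ga_def)
    have al0: "0 < al" using 3 by (simp add: al_be_ga_def)
    have be0: "0 \<le> be"
    proof -
      have "0 \<le> real a * (real b - 4)" using 3 by simp
      then show ?thesis by (simp add: al_be_ga_def algebra_simps)
    qed
    have ga0: "0 \<le> ga"
    proof -
      consider "a = 1" | "a = 2" | "3 \<le> a" using assms(1) by linarith
      then show ?thesis by cases (auto simp: al_be_ga_def)
    qed
    define D where "D = be^2 - 4 * al * ga"
    have e4: "4 * al * ga = (real a - 1) * (real a - 2) * ((real b - 1) * (real b - 2))"
      by (simp add: al_be_ga_def field_simps)
    have X: "(real a - 1) * (real a - 2) * (real b - 1) * (real b - 2) \<le> be^2"
      unfolding al_be_ga_def by (rule disc_nonneg[OF assms(1,2)])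
    have D0: "0 \<le> D" unfolding D_def using X e4 by (simp add: mult.assoc)
    have Dle: "sqrt D \<le> be"
    proof -
      have "D \<le> be^2" using al0 ga0 by (simp add: D_def)
      then have "sqrt D \<le> sqrt (be^2)" by (rule real_sqrt_le_mono)
      then show ?thesis using be0 by simp
    qed
    define r1 r2 where "r1 = (be - sqrt D) / (2 * al)" "r2 = (be + sqrt D) / (2 * al)"
    have r0: "0 \<le> r1" "0 \<le> r2" using Dle al0 be0 D0 by (auto simp: r1_r2_def intro!: divide_nonneg_pos)
    have sq: "sqrt D * sqrt D = D" using D0 by simp
    have fac: "Qp a b = smult al ([:r1, 1:] * [:r2, 1:])"
    proof -
      have "al * (r1 * r2) = ga"
      proof -
        have "al * (r1 * r2) = (be^2 - sqrt D * sqrt D) / (4 * al)"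
          using al0 by (simp add: r1_r2_def field_simps power2_eq_square)
        also have "\<dots> = ga" using al0 by (subst sq) (simp add: D_def field_simps)
        finally show ?thesis .
      qed
      moreover have "al * (r1 + r2) = be" using al0 by (simp add: r1_r2_def field_simps)
      ultimately show ?thesis unfolding Q by (simp add: algebra_simps)
    qed
    have n4: "a + b - 1 = (a + b - 5) + 4" using 3 assms(1) by simp
    have "sP^4 * Q = sP^4 * (sP^(a+b-5) * Qp a b)"
      using assms(4) unfolding n4 power_add by (simp add: algebra_simps)
    then have "Q = sP^(a+b-5) * Qp a b" using s4 by simp
    also have "\<dots> = smult al ((sP^(a+b-5) * [:r1, 1:]) * [:r2, 1:])"
      unfolding fac by (simp only: mult_smult_right mult.assoc)
    finally have QQ: "Q = smult al ((sP^(a+b-5) * [:r1, 1:]) * [:r2, 1:])" .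
    show ?thesis unfolding QQ
      by (intro LC_smult LC_mult_lin LC_sP_pow al0 r0) simp_all
  qed
qed

theorem theorem6p7:
  fixes a b :: nat and i :: int
  assumes "a \<ge> 1" and "b \<ge> 1" and "coprime a b" and "5 * a \<le> 3 * b"
  shows "(Acoef a b i (int a + int b - 3 - i))^2
           \<ge> Acoef a b (i - 1) (int a + int b - 3 - i + 1) * Acoef a b (i + 1) (int a + int b - 3 - i - 1)"
proof -
  have ab: "a < b" using assms(1,4) by linarith
  obtain P where g: "good a b P" using good_exists[OF assms(3,1) ab] by blast
  define Q where "Q = coeff P 2"
  have HDP: "HD (a+b-1) P" using goodD(3)[OF g] .
  have PC: "Pcoeff a b = (\<lambda>i j. if i + j \<le> a+b-1 then coeff (coeff P (a+b-1-i-j)) i else 0)"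
    by (rule Pcoeff_eq[OF assms(1,2) g])
  have Ae: "Acoef a b k (int a + int b - 3 - k) = cf Q k" for k
  proof (cases "0 \<le> k")
    case False then show ?thesis by (simp add: Acoef_def cf_def)
  next
    case True
    show ?thesis
    proof (cases "0 \<le> int a + int b - 3 - k")
      case True2: True
      have s: "nat k + nat (int a + int b - 3 - k) = a + b - 3" using True True2 ab by linarith
      have "a + b - 1 - nat k - nat (int a + int b - 3 - k) = 2" using s ab assms(1) by linarith
      then show ?thesis using True True2 s by (simp add: Acoef_def cf_def PC Q_def)
    next
      case False
      then have "a + b - 1 < nat k + 2" using True by linarith
      then have "coeff Q (nat k) = 0" unfolding Q_def by (rule HD_coeffD[OF HDP])
      then show ?thesis using True False by (simp add: Acoef_def cf_def)
    qed
  qed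
  have e1: "int a + int b - 3 - i + 1 = int a + int b - 3 - (i - 1)" by simp
  have e2: "int a + int b - 3 - i - 1 = int a + int b - 3 - (i + 1)" by simp
  have lay: "sP^4 * Q = sP^(a+b-1) * Qp a b"
    using goodD(2)[OF g] ab assms(1) unfolding lay_def Q_def by auto
  have "LCp Q" by (rule LC_layer2[OF assms(1,4) _ lay]) (use ab assms(1) in linarith)
  then have "cf Q (i-1) * cf Q (i+1) \<le> (cf Q i)^2" unfolding LCp_def by blast
  then show ?thesis unfolding e1 e2 Ae by simp
qed


end
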